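(* Let $V$ be a finite-dimensional irreducible $\mathfrak{W}_q$-module. Then there exists a unique quadruple $(m,n,\delta,\lambda)$ with $m,n\in\mathbb N$, $\delta\in\{\pm1\}$, $\lambda\in\mathbb C\setminus\{0\}$ such that $V$ is isomorphic to the $\mathfrak{W}_q$-module $(L_m\otimes L_n)^{\delta,\lambda}$.
   Context: Throughout, $q$ is a nonzero complex number that is not a root of unity; $[x,y]=xy-yx$, $[x,y]_q=qxy-q^{-1}yx$, $[n]_q=\frac{q^n-q^{-n}}{q-q^{-1}}$. $\mathfrak{W}_q$ is the algebra over $\mathbb C$ generated by $E_1,E_2,F_1,F_2,K_1^{\pm1},K_2^{\pm1},I^{\pm1}$ subject to: $I$ is central; $II^{-1}=I^{-1}I=1$, $K_1K_1^{-1}=K_1^{-1}K_1=1$, $K_2K_2^{-1}=K_2^{-1}K_2=1$; $[K_1,E_2]=[K_1,F_2]=[K_1,K_2]=[K_2,E_1]=[K_2,F_1]=0$; $[E_1,K_1]_q=[K_1,F_1]_q=[E_2,K_2]_q=[K_2,F_2]_q=0$; $[E_1,E_2]=[E_1,F_2]=[F_1,E_2]=[F_1,F_2]=0$; $[E_1,F_1]=\frac{K_1-IK_1^{-1}}{q-q^{-1}}$; $[E_2,F_2]=\frac{IK_2-K_2^{-1}}{q-q^{-1}}$. For $m,n\in\mathbb N$, $\delta\in\{\pm1\}$, $\lambda\in\mathbb C\setminus\{0\}$, $(L_m\otimes L_n)^{\delta,\lambda}$ denotes the $(m+1)(n+1)$-dimensional $\mathfrak{W}_q$-module with basis $v_i^{(m)}\otimes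 v_j^{(n)}$ ($0\le i\le m$, $0\le j\le n$) on which: $E_1v_i^{(m)}\otimes v_j^{(n)}=\lambda[i]_q[m-i+1]_qv_{i-1}^{(m)}\otimes v_j^{(n)}$ (zero if $i=0$); $E_2v_i^{(m)}\otimes v_j^{(n)}=\delta\lambda[j]_q[n-j+1]_qv_i^{(m)}\otimes v_{j-1}^{(n)}$ (zero if $j=0$); $F_1v_i^{(m)}\otimes v_j^{(n)}=v_{i+1}^{(m)}\otimes v_j^{(n)}$ (zero if $i=m$); $F_2v_i^{(m)}\otimes v_j^{(n)}=v_i^{(m)}\otimes v_{j+1}^{(n)}$ (zero if $j=n$); $K_1$ acts on $v_i^{(m)}\otimes v_j^{(n)}$ by $\lambda q^{m-2i}$; $K_2$ by $\delta\lambda^{-1}q^{n-2j}$; $I$ by $\lambda^2$. (Equivalently it is the pullback via $E_i\mapsto E_i$ etc. of $L_m\otimes L_n$, with $L_n$ the $(n+1)$-dimensional irreducible $U_q(\mathfrak{sl}_2)$-module of type $1$, twisted by the automorphism $E_1\mapsto\lambda E_1$, $E_2\mapsto\delta\lambda E_2$, $F_i\mapsto F_i$, $K_1^{\pm1}\mapsto\lambda^{\pm1}K_1^{\pm1}$, $K_2^{\pm1}\mapsto\delta\lambda^{\mp1}K_2^{\pm1}$, $I^{\pm1}\mapsto\lambda^{\pm2}I^{\pm1}$.) *)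

theory Defs
  imports Complex_Main "HOL-Library.Function_Algebras"
begin

record 'v wq_ops =
  opE1 :: "'v \<Rightarrow> 'v"
  opE2 :: "'v \<Rightarrow> 'v"
  opF1 :: "'v \<Rightarrow> 'v"
  opF2 :: "'v \<Rightarrow> 'v"
  opK1 :: "'v \<Rightarrow> 'v"
  opK1i :: "'v \<Rightarrow> 'v"
  opK2 :: "'v \<Rightarrow> 'v"
  opK2i :: "'v \<Rightarrow> 'v"
  opI :: "'v \<Rightarrow> 'v"
  opIi :: "'v \<Rightarrow> 'v"

definition wq_gens :: "'v wq_ops \<Rightarrow> ('v \<Rightarrow> 'v) set" where
  "wq_gens r = {opE1 r, opE2 r, opF1 r, opF2 r, opK1 r, opK1i r, opK2 r, opK2i r, opI r, opIi r}"

definition qint :: "complex \<Rightarrow> nat \<Rightarrow> complex" where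
  "qint q n = (q ^ n - inverse q ^ n) / (q - inverse q)"

definition lin_on :: "(complex \<Rightarrow> 'v::ab_group_add \<Rightarrow> 'v) \<Rightarrow> 'v set \<Rightarrow> ('v \<Rightarrow> 'v) \<Rightarrow> bool" where
  "lin_on sc V f \<longleftrightarrow> (\<forall>x\<in>V. f x \<in> V) \<and> (\<forall>x\<in>V. \<forall>y\<in>V. f (x + y) = f x + f y)
      \<and> (\<forall>c. \<forall>x\<in>V. f (sc c x) = sc c (f x))"

definition wq_module :: "complex \<Rightarrow> (complex \<Rightarrow> 'v::ab_group_add \<Rightarrow> 'v) \<Rightarrow> 'v set \<Rightarrow> 'v wq_ops \<Rightarrow> bool" where
  "wq_module q sc V r \<longleftrightarrow>
     vector_space sc \<and> module.subspace sc V \<and> (\<forall>f\<in>wq_gens r. lin_on sc V f) \<and>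
     (\<forall>x\<in>V.
        \<comment> \<open>I central\<close>
        (\<forall>f\<in>wq_gens r. opI r (f x) = f (opI r x)) \<and>
        \<comment> \<open>inverses\<close>
        opI r (opIi r x) = x \<and> opIi r (opI r x) = x \<and>
        opK1 r (opK1i r x) = x \<and> opK1i r (opK1 r x) = x \<and>
        opK2 r (opK2i r x) = x \<and> opK2i r (opK2 r x) = x \<and>
        \<comment> \<open>commutations\<close>
        opK1 r (opE2 r x) = opE2 r (opK1 r x) \<and>
        opK1 r (opF2 r x) = opF2 r (opK1 r x) \<and>
        opK1 r (opK2 r x) = opK2 r (opK1 r x) \<and>
        opK2 r (opE1 r x) = opE1 r (opK2 r x) \<and>
        opK2 r (opF1 r x) = opF1 r (opK2 r x) \<and>
        \<comment> \<open>q-commutators\<close>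
        sc q (opE1 r (opK1 r x)) - sc (inverse q) (opK1 r (opE1 r x)) = 0 \<and>
        sc q (opK1 r (opF1 r x)) - sc (inverse q) (opF1 r (opK1 r x)) = 0 \<and>
        sc q (opE2 r (opK2 r x)) - sc (inverse q) (opK2 r (opE2 r x)) = 0 \<and>
        sc q (opK2 r (opF2 r x)) - sc (inverse q) (opF2 r (opK2 r x)) = 0 \<and>
        \<comment> \<open>commuting E/F of different indices\<close>
        opE1 r (opE2 r x) = opE2 r (opE1 r x) \<and>
        opE1 r (opF2 r x) = opF2 r (opE1 r x) \<and>
        opF1 r (opE2 r x) = opE2 r (opF1 r x) \<and>
        opF1 r (opF2 r x) = opF2 r (opF1 r x) \<and>
        \<comment> \<open>[E1,F1] and [E2,F2]\<close>
        opE1 r (opF1 r x) - opF1 r (opE1 r x)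
          = sc (inverse (q - inverse q)) (opK1 r x - opI r (opK1i r x)) \<and>
        opE2 r (opF2 r x) - opF2 r (opE2 r x)
          = sc (inverse (q - inverse q)) (opI r (opK2 r x) - opK2i r x))"

definition fin_dim :: "(complex \<Rightarrow> 'v::ab_group_add \<Rightarrow> 'v) \<Rightarrow> 'v set \<Rightarrow> bool" where
  "fin_dim sc V \<longleftrightarrow> (\<exists>B. finite B \<and> B \<subseteq> V \<and> module.span sc B = V)"

definition wq_irreducible :: "(complex \<Rightarrow> 'v::ab_group_add \<Rightarrow> 'v) \<Rightarrow> 'v set \<Rightarrow> 'v wq_ops \<Rightarrow> bool" where
  "wq_irreducible sc V r \<longleftrightarrow> V \<noteq> {0} \<and>
     (\<forall>W. module.subspace sc W \<and> W \<subseteq> V \<and> (\<forall>f\<in>wq_gens r. f ` W \<subseteq> W) \<longrightarrow> W = {0} \<or> W = V)"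

definition wq_iso :: "(complex \<Rightarrow> 'v::ab_group_add \<Rightarrow> 'v) \<Rightarrow> 'v set \<Rightarrow> 'v wq_ops \<Rightarrow>
    (complex \<Rightarrow> 'w::ab_group_add \<Rightarrow> 'w) \<Rightarrow> 'w set \<Rightarrow> 'w wq_ops \<Rightarrow> bool" where
  "wq_iso sc V r sc' W r' \<longleftrightarrow> (\<exists>\<phi>. bij_betw \<phi> V W \<and>
      (\<forall>x\<in>V. \<forall>y\<in>V. \<phi> (x + y) = \<phi> x + \<phi> y) \<and> (\<forall>c. \<forall>x\<in>V. \<phi> (sc c x) = sc' c (\<phi> x)) \<and>
      (\<forall>x\<in>V. \<phi> (opE1 r x) = opE1 r' (\<phi> x) \<and> \<phi> (opE2 r x) = opE2 r' (\<phi> x) \<and>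
              \<phi> (opF1 r x) = opF1 r' (\<phi> x) \<and> \<phi> (opF2 r x) = opF2 r' (\<phi> x) \<and>
              \<phi> (opK1 r x) = opK1 r' (\<phi> x) \<and> \<phi> (opK1i r x) = opK1i r' (\<phi> x) \<and>
              \<phi> (opK2 r x) = opK2 r' (\<phi> x) \<and> \<phi> (opK2i r x) = opK2i r' (\<phi> x) \<and>
              \<phi> (opI r x) = opI r' (\<phi> x) \<and> \<phi> (opIi r x) = opIi r' (\<phi> x)))"

text \<open>The module (L_m \<otimes> L_n)^{\<delta>,\<lambda>}: vectors are coordinate functions v :: nat \<times> nat \<Rightarrow> complex,
 v = \<Sum> v(i,j) (v_i^(m) \<otimes> v_j^(n)), supported on {0..m} \<times> {0..n}.\<close>
definition fscale :: "complex \<Rightarrow> (nat \<times> nat \<Rightarrow> complex) \<Rightarrow> (nat \<times> nat \<Rightarrow> complex)" where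
  "fscale c v = (\<lambda>p. c * v p)"

definition Lcarrier :: "nat \<Rightarrow> nat \<Rightarrow> (nat \<times> nat \<Rightarrow> complex) set" where
  "Lcarrier m n = {v. \<forall>i j. (m < i \<or> n < j) \<longrightarrow> v (i, j) = 0}"

definition Lops :: "complex \<Rightarrow> nat \<Rightarrow> nat \<Rightarrow> complex \<Rightarrow> complex \<Rightarrow> (nat \<times> nat \<Rightarrow> complex) wq_ops" where
  "Lops q m n d lam = \<lparr>
     opE1 = (\<lambda>v (i, j). if i < m then lam * qint q (i + 1) * qint q (m - i) * v (i + 1, j) else 0),
     opE2 = (\<lambda>v (i, j). if j < n then d * lam * qint q (j + 1) * qint q (n - j) * v (i, j + 1) else 0),
     opF1 = (\<lambda>v (i, j). if 0 < i \<and> i \<le> m then v (i - 1, j) else 0),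
     opF2 = (\<lambda>v (i, j). if 0 < j \<and> j \<le> n then v (i, j - 1) else 0),
     opK1 = (\<lambda>v (i, j). lam * q powi (int m - 2 * int i) * v (i, j)),
     opK1i = (\<lambda>v (i, j). inverse lam * q powi (2 * int i - int m) * v (i, j)),
     opK2 = (\<lambda>v (i, j). d * inverse lam * q powi (int n - 2 * int j) * v (i, j)),
     opK2i = (\<lambda>v (i, j). inverse d * lam * q powi (2 * int j - int n) * v (i, j)),
     opI = (\<lambda>v p. lam\<^sup>2 * v p),
     opIi = (\<lambda>v p. inverse (lam\<^sup>2) * v p) \<rparr>"

end

theory Submission imports Defs "HOL-Computational_Algebra.Fundamental_Theorem_Algebra"
begin

locale fdvs = vector_space sc for sc :: "complex \<Rightarrow> 'v::ab_group_add \<Rightarrow> 'v" +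
  fixes V :: "'v set" and B :: "'v set"
  assumes subV: "subspace V" and finB: "finite B" and BV: "B \<subseteq> V" and spanB: "span B = V"
begin

lemma lin_in: "lin_on sc V T \<Longrightarrow> x \<in> V \<Longrightarrow> T x \<in> V"
  by (simp add: lin_on_def)
lemma lin_add: "lin_on sc V T \<Longrightarrow> x \<in> V \<Longrightarrow> y \<in> V \<Longrightarrow> T (x + y) = T x + T y"
  by (simp add: lin_on_def)
lemma lin_scale: "lin_on sc V T \<Longrightarrow> x \<in> V \<Longrightarrow> T (sc c x) = sc c (T x)"
  by (simp add: lin_on_def)
lemma lin_zero: "lin_on sc V T \<Longrightarrow> T 0 = 0"
  using lin_scale[of T 0 0] subspace_0[OF subV] by simp
lemma lin_diff: "lin_on sc V T \<Longrightarrow> x \<in> V \<Longrightarrow> y \<in> V \<Longrightarrow> T (x - y) = T x - T y"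
proof -
  assume T: "lin_on sc V T" and x: "x \<in> V" and y: "y \<in> V"
  have "x - y \<in> V" using subspace_diff[OF subV x y] .
  then have "T (x - y + y) = T (x - y) + T y" using lin_add[OF T _ y] by blast
  then show ?thesis by (simp add: algebra_simps)
qed
lemma lin_sum: assumes T: "lin_on sc V T" and g: "\<And>x. x \<in> A \<Longrightarrow> g x \<in> V"
  shows "T (sum g A) = (\<Sum>x\<in>A. T (g x))"
proof (cases "finite A")
  case True
  then show ?thesis using g
  proof (induction A rule: finite_induct)
    case empty then show ?case using lin_zero[OF T] by simp
  next
    case (insert a A)
    have "sum g A \<in> V" using insert subspace_sum[OF subV] by blast
    then show ?case using insert lin_add[OF T] by simp
  qed
next
  case False then show ?thesis using lin_zero[OF T] by simp
qed
lemma lin_pow: "lin_on sc V T \<Longrightarrow> lin_on sc V (T ^^ k)"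
proof (induction k)
  case 0 then show ?case by (simp add: lin_on_def)
next
  case (Suc k)
  then show ?case unfolding lin_on_def by auto
qed

lemma eig_sum_zero:
  assumes T: "lin_on sc V T" and fin: "finite S"
   and ev: "\<And>s. s\<in>S \<Longrightarrow> w s \<in> V \<and> T (w s) = sc (\<mu> s) (w s)"
   and inj: "inj_on \<mu> S" and sum0: "sum w S = 0"
  shows "\<forall>s\<in>S. w s = 0"
  using fin ev inj sum0
proof (induction S arbitrary: w rule: finite_induct)
  case empty then show ?case by simp
next
  case (insert a S)
  let ?w' = "\<lambda>s. sc (\<mu> s - \<mu> a) (w s)"
  have wV: "\<And>s. s \<in> insert a S \<Longrightarrow> w s \<in> V" using insert.prems by blast
  have "T (sum w (insert a S)) = (\<Sum>s\<in>insert a S. T (w s))"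
    by (rule lin_sum[OF T wV])
  also have "\<dots> = (\<Sum>s\<in>insert a S. sc (\<mu> s) (w s))"
    using insert.prems(1) by (intro sum.cong) auto
  finally have "(\<Sum>s\<in>insert a S. sc (\<mu> s) (w s)) = 0"
    using insert.prems(3) lin_zero[OF T] by simp
  moreover have "sc (\<mu> a) (sum w (insert a S)) = 0" using insert.prems(3) by simp
  ultimately have "(\<Sum>s\<in>insert a S. sc (\<mu> s) (w s)) - sc (\<mu> a) (sum w (insert a S)) = 0" by simp
  then have "(\<Sum>s\<in>insert a S. ?w' s) = 0"
    by (simp add: scale_sum_right scale_left_diff_distrib sum_subtractf)
  then have s0: "sum ?w' S = 0" using insert.hyps by simp
  have ev': "\<And>s. s\<in>S \<Longrightarrow> ?w' s \<in> V \<and> T (?w' s) = sc (\<mu> s) (?w' s)"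
    using insert.prems(1) lin_scale[OF T] subspace_scale[OF subV] by (auto simp: scale_left_commute)
  have "\<forall>s\<in>S. ?w' s = 0" using insert.IH[OF ev' _ s0] insert.prems(2) by auto
  moreover have "\<And>s. s \<in> S \<Longrightarrow> \<mu> s \<noteq> \<mu> a" using insert.prems(2) insert.hyps by (auto simp: inj_on_def)
  ultimately have z: "\<forall>s\<in>S. w s = 0" by auto
  then have "sum w S = 0" by simp
  then have "w a = 0" using insert.prems(3) insert.hyps by simp
  then show ?case using z by simp
qed


lemma indep_bound: "independent S \<Longrightarrow> S \<subseteq> V \<Longrightarrow> finite S \<and> card S \<le> card B"
  using independent_span_bound[OF finB] spanB by auto

lemma eig_seq_zero:
  fixes f :: "nat \<Rightarrow> 'v" and \<mu> :: "nat \<Rightarrow> complex"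
  assumes T: "lin_on sc V T" and fV: "\<And>k. f k \<in> V" and ev: "\<And>k. T (f k) = sc (\<mu> k) (f k)"
   and inj: "inj \<mu>"
  shows "\<exists>k. f k = 0"
proof (rule ccontr)
  assume "\<not> (\<exists>k. f k = 0)"
  then have nz: "\<And>k. f k \<noteq> 0" by blast
  define N where "N = Suc (card B)"
  have injf: "inj f"
  proof (rule injI)
    fix i j assume "f i = f j"
    then have "sc (\<mu> i) (f i) = sc (\<mu> j) (f i)" using ev by metis
    then have "\<mu> i = \<mu> j" using nz by simp
    then show "i = j" using inj by (simp add: inj_def)
  qed
  have ind: "independent (f ` {..<N})"
    unfolding independent_explicit_finite_subsets
  proof (intro allI impI ballI)
    fix S u v assume S: "S \<subseteq> f ` {..<N}" "finite S" "(\<Sum>v\<in>S. sc (u v) v) = 0" and v: "v \<in> S"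
    obtain K where K: "K \<subseteq> {..<N}" "S = f ` K" using S(1) by (auto simp: subset_image_iff)
    have finK: "finite K" using K(1) finite_subset by blast
    have injK: "inj_on f K" using injf inj_on_subset by blast
    have "(\<Sum>k\<in>K. sc (u (f k)) (f k)) = 0" using S(3) K(2) sum.reindex[OF injK, of "\<lambda>v. sc (u v) v"] by simp
    moreover have "\<And>k. k \<in> K \<Longrightarrow> sc (u (f k)) (f k) \<in> V \<and> T (sc (u (f k)) (f k)) = sc (\<mu> k) (sc (u (f k)) (f k))"
      using fV ev lin_scale[OF T] subspace_scale[OF subV] by (auto simp: scale_left_commute)
    ultimately have "\<forall>k\<in>K. sc (u (f k)) (f k) = 0"
      using eig_sum_zero[OF T finK, of "\<lambda>k. sc (u (f k)) (f k)" \<mu>] inj inj_on_subset by blast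
    then show "u v = 0" using v K(2) nz by auto
  qed
  have "f ` {..<N} \<subseteq> V" using fV by auto
  from indep_bound[OF ind this] have "card (f ` {..<N}) \<le> card B" by simp
  moreover have "card (f ` {..<N}) = N" using card_image[OF inj_on_subset[OF injf]] by simp
  ultimately show False unfolding N_def by simp
qed

definition opoly :: "('v \<Rightarrow> 'v) \<Rightarrow> complex poly \<Rightarrow> 'v \<Rightarrow> 'v" where
  "opoly T p x = (\<Sum>k\<le>degree p. sc (coeff p k) ((T^^k) x))"

lemma opoly_bound: "degree p \<le> M \<Longrightarrow> opoly T p x = (\<Sum>k\<le>M. sc (coeff p k) ((T^^k) x))"
  unfolding opoly_def by (rule sum.mono_neutral_left) (auto simp: coeff_eq_0)

lemma funpow_in: "(\<And>x. x \<in> W \<Longrightarrow> T x \<in> W) \<Longrightarrow> x \<in> W \<Longrightarrow> (T^^k) x \<in> W"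
  by (induction k) auto

lemma opoly_lin:
  assumes T: "lin_on sc V T" and x: "x \<in> V"
  shows "opoly T ([:-a,1:]*p) x = T (opoly T p x) - sc a (opoly T p x)"
proof -
  define M where "M = Suc (degree p)"
  have pe: "[:-a,1:]*p = pCons 0 p - smult a p" by (simp add: mult_pCons_left)
  have dg: "degree ([:-a,1:]*p) \<le> M" unfolding M_def
    using degree_mult_le[of "[:-a,1:]" p] by simp
  have TkV: "\<And>k. (T^^k) x \<in> V" using funpow_in[of V T x] lin_in[OF T] x by blast
  have "opoly T ([:-a,1:]*p) x = (\<Sum>k\<le>M. sc (coeff (pCons 0 p) k - a * coeff p k) ((T^^k) x))"
    using opoly_bound[OF dg] pe by simp
  also have "\<dots> = (\<Sum>k\<le>M. sc (coeff (pCons 0 p) k) ((T^^k) x)) - sc a (\<Sum>k\<le>M. sc (coeff p k) ((T^^k) x))"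
    by (simp add: scale_left_diff_distrib sum_subtractf scale_sum_right)
  also have "(\<Sum>k\<le>M. sc (coeff (pCons 0 p) k) ((T^^k) x)) = (\<Sum>k\<le>degree p. sc (coeff p k) ((T^^Suc k) x))"
    unfolding M_def by (subst sum.atMost_Suc_shift) simp
  also have "\<dots> = T (opoly T p x)"
    unfolding opoly_def using TkV
    by (subst lin_sum[OF T]) (auto intro: subspace_scale[OF subV] simp: lin_scale[OF T])
  also have "(\<Sum>k\<le>M. sc (coeff p k) ((T^^k) x)) = opoly T p x"
    using opoly_bound[of p M] unfolding M_def by simp
  finally show ?thesis .
qed

lemma eig_exists:
  assumes T: "lin_on sc V T" and W: "subspace W" "W \<subseteq> V" "W \<noteq> {0}" and inv: "\<And>x. x\<in>W \<Longrightarrow> T x \<in> W"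
  shows "\<exists>\<mu> x. x \<in> W \<and> x \<noteq> 0 \<and> T x = sc \<mu> x"
proof -
  have TkW: "\<And>k x. x \<in> W \<Longrightarrow> (T^^k) x \<in> W" using funpow_in[of W T] inv by metis
  have main: "\<And>p x. degree p = d \<Longrightarrow> p \<noteq> 0 \<Longrightarrow> x \<in> W \<Longrightarrow> x \<noteq> 0 \<Longrightarrow> opoly T p x = 0 \<Longrightarrow>
     \<exists>\<mu> x. x \<in> W \<and> x \<noteq> 0 \<and> T x = sc \<mu> x" for d
  proof (induction d rule: less_induct)
    case (less d p x)
    show ?case
    proof (cases "degree p = 0")
      case True
      then have "opoly T p x = sc (coeff p 0) x" unfolding opoly_def by simp
      moreover have "coeff p 0 \<noteq> 0" using True less.prems(2) leading_coeff_0_iff by fastforce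
      ultimately show ?thesis using less.prems by simp
    next
      case False
      then have "\<not> constant (poly p)" using constant_degree[of p] by simp
      then obtain z where "poly p z = 0" using fundamental_theorem_of_algebra by blast
      then obtain p' where p': "p = [:-z,1:] * p'" using poly_eq_0_iff_dvd by (metis dvdE)
      have p'0: "p' \<noteq> 0" using p' less.prems(2) by auto
      have "degree ([:-z,1:]*p') = degree [:-z,1:] + degree p'" by (rule degree_mult_eq) (use p'0 in simp_all)
      then have dp: "degree p = Suc (degree p')" using p' by simp
      define y where "y = opoly T p' x"
      have yW: "y \<in> W" unfolding y_def opoly_def
        by (intro subspace_sum[OF W(1)] subspace_scale[OF W(1)] TkW less.prems)
      have "T y - sc z y = 0" using opoly_lin[OF T, of x z p'] less.prems W(2) p' unfolding y_def by auto
      then have Ty: "T y = sc z y" by simp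
      show ?thesis
      proof (cases "y = 0")
        case True
        then show ?thesis using less.IH[of "degree p'" p' x] less.prems dp p'0 unfolding y_def by auto
      next
        case False
        then show ?thesis using yW Ty by blast
      qed
    qed
  qed
  obtain v where v: "v \<in> W" "v \<noteq> 0" using W(1) W(3) subspace_0 by blast
  define N where "N = card B"
  define g where "g k = (T^^k) v" for k
  have gV: "\<And>k. g k \<in> V" using TkW v W(2) unfolding g_def by blast
  have "\<exists>c. (\<exists>k\<le>N. c k \<noteq> 0) \<and> (\<Sum>k\<le>N. sc (c k) (g k)) = 0"
  proof (cases "inj_on g {..N}")
    case False
    then obtain i j where ij: "i \<le> N" "j \<le> N" "i \<noteq> j" "g i = g j" by (auto simp: inj_on_def)
    define c where "c k = (if k = i then 1 else 0) - (if k = j then 1 else (0::complex))" for k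
    have "(\<Sum>k\<le>N. sc (c k) (g k)) = (\<Sum>k\<le>N. (if k = i then g k else 0)) - (\<Sum>k\<le>N. (if k = j then g k else 0))"
      unfolding c_def by (simp add: scale_left_diff_distrib sum_subtractf if_distrib[of "\<lambda>c. sc c _"] cong: if_cong)
    also have "\<dots> = 0" using ij by simp
    finally show ?thesis using ij by (intro exI[of _ c]) (auto simp: c_def)
  next
    case True
    have "card (g ` {..N}) = Suc N" using card_image[OF True] by simp
    then have "\<not> independent (g ` {..N})" using indep_bound gV unfolding N_def by fastforce
    then obtain u where u: "\<exists>x\<in>g ` {..N}. u x \<noteq> 0" "(\<Sum>x\<in>g ` {..N}. sc (u x) x) = 0"
      using dependent_finite[of "g ` {..N}"] by auto
    have "(\<Sum>k\<le>N. sc (u (g k)) (g k)) = 0" using u(2) sum.reindex[OF True, of "\<lambda>x. sc (u x) x"] by simp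
    then show ?thesis using u(1) by (intro exI[of _ "\<lambda>k. u (g k)"]) auto
  qed
  then obtain c where c: "\<exists>k\<le>N. c k \<noteq> 0" "(\<Sum>k\<le>N. sc (c k) (g k)) = 0" by blast
  define p where "p = (\<Sum>k\<le>N. monom (c k) k)"
  have cp: "coeff p k = (if k \<le> N then c k else 0)" for k
    unfolding p_def by (simp add: coeff_sum coeff_monom)
  have p0: "p \<noteq> 0" using c(1) cp by (metis coeff_0)
  have dp: "degree p \<le> N" using cp by (intro degree_le) auto
  have "opoly T p v = 0" using opoly_bound[OF dp] c(2) cp unfolding g_def by simp
  then show ?thesis using main[OF refl p0 v] by blast
qed


lemma iter_V: "lin_on sc V A \<Longrightarrow> x \<in> V \<Longrightarrow> (A^^k) x \<in> V"
  using funpow_in[of V A x k] lin_in by blast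

lemma iter_lin: "lin_on sc V A \<Longrightarrow> x \<in> V \<Longrightarrow> (A^^k) (sc c x) = sc c ((A^^k) x)"
  using lin_pow lin_scale by blast

lemma iter_eig:
  assumes A: "lin_on sc V A" and x: "x \<in> V" and Tx: "T x = sc \<mu> x"
    and step: "\<And>y \<mu>. y \<in> V \<Longrightarrow> T y = sc \<mu> y \<Longrightarrow> T (A y) = sc (c * \<mu>) (A y)"
  shows "T ((A^^k) x) = sc (c^k * \<mu>) ((A^^k) x)"
proof (induction k)
  case 0 then show ?case using Tx by simp
next
  case (Suc k)
  have "T (A ((A^^k) x)) = sc (c * (c^k * \<mu>)) (A ((A^^k) x))"
    by (rule step[OF iter_V[OF A x] Suc])
  then show ?case by (simp add: mult.assoc)
qed

lemma iter_comm:
  assumes G: "lin_on sc V G" and x: "x \<in> V" and c: "\<And>y. y \<in> V \<Longrightarrow> A (G y) = G (A y)"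
  shows "A ((G^^k) x) = (G^^k) (A x)"
proof (induction k)
  case 0 then show ?case by simp
next
  case (Suc k)
  have "A (G ((G^^k) x)) = G (A ((G^^k) x))" using c iter_V[OF G x] by blast
  then show ?case using Suc by simp
qed

lemma comm_ev:
  assumes A: "lin_on sc V A" and y: "y \<in> V" and c: "T (A y) = A (T y)" and Ty: "T y = sc \<mu> y"
  shows "T (A y) = sc \<mu> (A y)"
  using c Ty lin_scale[OF A y] by simp

lemma top_exists: "f (0::nat) \<noteq> 0 \<Longrightarrow> f k = 0 \<Longrightarrow> \<exists>j. f j \<noteq> 0 \<and> f (Suc j) = 0"
  by (induction k) auto

end

locale wq = fdvs sc V B for sc :: "complex \<Rightarrow> 'v::ab_group_add \<Rightarrow> 'v" and V B +
  fixes q :: complex and r :: "'v wq_ops"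
  assumes q0: "q \<noteq> 0" and qnr: "\<forall>k::nat. 0 < k \<longrightarrow> q ^ k \<noteq> 1"
    and WM: "wq_module q sc V r" and irr: "wq_irreducible sc V r"
begin

abbreviation "E1 \<equiv> opE1 r"
abbreviation "E2 \<equiv> opE2 r"
abbreviation "F1 \<equiv> opF1 r"
abbreviation "F2 \<equiv> opF2 r"
abbreviation "K1 \<equiv> opK1 r"
abbreviation "K1i \<equiv> opK1i r"
abbreviation "K2 \<equiv> opK2 r"
abbreviation "K2i \<equiv> opK2i r"
abbreviation "I \<equiv> opI r"
abbreviation "Ii \<equiv> opIi r"

definition "c0 = inverse (q - inverse q)"

lemma gens: "lin_on sc V E1" "lin_on sc V E2" "lin_on sc V F1" "lin_on sc V F2"
  "lin_on sc V K1" "lin_on sc V K1i" "lin_on sc V K2" "lin_on sc V K2i" "lin_on sc V I" "lin_on sc V Ii"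
  using WM unfolding wq_module_def wq_gens_def by auto

lemma allrel: "x \<in> V \<Longrightarrow> (\<forall>f\<in>wq_gens r. I (f x) = f (I x)) \<and>
        I (Ii x) = x \<and> Ii (I x) = x \<and>
        K1 (K1i x) = x \<and> K1i (K1 x) = x \<and>
        K2 (K2i x) = x \<and> K2i (K2 x) = x \<and>
        K1 (E2 x) = E2 (K1 x) \<and>
        K1 (F2 x) = F2 (K1 x) \<and>
        K1 (K2 x) = K2 (K1 x) \<and>
        K2 (E1 x) = E1 (K2 x) \<and>
        K2 (F1 x) = F1 (K2 x) \<and>
        sc q (E1 (K1 x)) - sc (inverse q) (K1 (E1 x)) = 0 \<and>
        sc q (K1 (F1 x)) - sc (inverse q) (F1 (K1 x)) = 0 \<and>
        sc q (E2 (K2 x)) - sc (inverse q) (K2 (E2 x)) = 0 \<and>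
        sc q (K2 (F2 x)) - sc (inverse q) (F2 (K2 x)) = 0 \<and>
        E1 (E2 x) = E2 (E1 x) \<and>
        E1 (F2 x) = F2 (E1 x) \<and>
        F1 (E2 x) = E2 (F1 x) \<and>
        F1 (F2 x) = F2 (F1 x) \<and>
        E1 (F1 x) - F1 (E1 x) = sc (inverse (q - inverse q)) (K1 x - I (K1i x)) \<and>
        E2 (F2 x) - F2 (E2 x) = sc (inverse (q - inverse q)) (I (K2 x) - K2i x)"
  using WM unfolding wq_module_def by blast

lemma Icomm: "x \<in> V \<Longrightarrow> f \<in> wq_gens r \<Longrightarrow> I (f x) = f (I x)" using allrel by blast
lemma inv_rels: "x \<in> V \<Longrightarrow> I (Ii x) = x" "x \<in> V \<Longrightarrow> Ii (I x) = x"
   "x \<in> V \<Longrightarrow> K1 (K1i x) = x" "x \<in> V \<Longrightarrow> K1i (K1 x) = x"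
   "x \<in> V \<Longrightarrow> K2 (K2i x) = x" "x \<in> V \<Longrightarrow> K2i (K2 x) = x"
  using allrel by blast+
lemma comms: "x \<in> V \<Longrightarrow> K1 (E2 x) = E2 (K1 x)" "x \<in> V \<Longrightarrow> K1 (F2 x) = F2 (K1 x)"
  "x \<in> V \<Longrightarrow> K1 (K2 x) = K2 (K1 x)" "x \<in> V \<Longrightarrow> K2 (E1 x) = E1 (K2 x)"
  "x \<in> V \<Longrightarrow> K2 (F1 x) = F1 (K2 x)" "x \<in> V \<Longrightarrow> E1 (E2 x) = E2 (E1 x)"
  "x \<in> V \<Longrightarrow> E1 (F2 x) = F2 (E1 x)" "x \<in> V \<Longrightarrow> F1 (E2 x) = E2 (F1 x)"
  "x \<in> V \<Longrightarrow> F1 (F2 x) = F2 (F1 x)"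
  using allrel by blast+

lemma EF1: "x \<in> V \<Longrightarrow> E1 (F1 x) = F1 (E1 x) + sc c0 (K1 x - I (K1i x))"
  using allrel[of x] unfolding c0_def by (metis diff_add_cancel add.commute)
lemma EF2: "x \<in> V \<Longrightarrow> E2 (F2 x) = F2 (E2 x) + sc c0 (I (K2 x) - K2i x)"
  using allrel[of x] unfolding c0_def by (metis diff_add_cancel add.commute)

lemma qrel_up: assumes "sc q a - sc (inverse q) b = 0" shows "b = sc (q^2) a"
proof -
  have "sc (inverse q) b = sc q a" using assms by simp
  then have "sc q (sc (inverse q) b) = sc q (sc q a)" by simp
  then show ?thesis using q0 by (simp add: power2_eq_square)
qed
lemma qrel_down: assumes "sc q b - sc (inverse q) a = 0" shows "b = sc (inverse (q^2)) a"
proof -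
  have "sc q b = sc (inverse q) a" using assms by simp
  then have "sc (inverse q) (sc q b) = sc (inverse q) (sc (inverse q) a)" by simp
  then show ?thesis using q0 by (simp add: power2_eq_square)
qed

lemma K1E1: "x \<in> V \<Longrightarrow> K1 (E1 x) = sc (q^2) (E1 (K1 x))" using allrel[of x] qrel_up by blast
lemma K1F1: "x \<in> V \<Longrightarrow> K1 (F1 x) = sc (inverse (q^2)) (F1 (K1 x))" using allrel[of x] qrel_down by blast
lemma K2E2: "x \<in> V \<Longrightarrow> K2 (E2 x) = sc (q^2) (E2 (K2 x))" using allrel[of x] qrel_up by blast
lemma K2F2: "x \<in> V \<Longrightarrow> K2 (F2 x) = sc (inverse (q^2)) (F2 (K2 x))" using allrel[of x] qrel_down by blast

lemma ev_E1: "y \<in> V \<Longrightarrow> K1 y = sc \<mu> y \<Longrightarrow> K1 (E1 y) = sc (q^2 * \<mu>) (E1 y)"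
  using K1E1 lin_scale[OF gens(1)] by simp
lemma ev_F1: "y \<in> V \<Longrightarrow> K1 y = sc \<mu> y \<Longrightarrow> K1 (F1 y) = sc (inverse (q^2) * \<mu>) (F1 y)"
  using K1F1 lin_scale[OF gens(3)] by simp
lemma ev_E2: "y \<in> V \<Longrightarrow> K2 y = sc \<mu> y \<Longrightarrow> K2 (E2 y) = sc (q^2 * \<mu>) (E2 y)"
  using K2E2 lin_scale[OF gens(2)] by simp
lemma ev_F2: "y \<in> V \<Longrightarrow> K2 y = sc \<mu> y \<Longrightarrow> K2 (F2 y) = sc (inverse (q^2) * \<mu>) (F2 y)"
  using K2F2 lin_scale[OF gens(4)] by simp

lemma ev_nz1: "y \<in> V \<Longrightarrow> y \<noteq> 0 \<Longrightarrow> K1 y = sc \<mu> y \<Longrightarrow> \<mu> \<noteq> 0"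
  using inv_rels(4)[of y] lin_zero[OF gens(6)] by auto
lemma ev_nz2: "y \<in> V \<Longrightarrow> y \<noteq> 0 \<Longrightarrow> K2 y = sc \<mu> y \<Longrightarrow> \<mu> \<noteq> 0"
  using inv_rels(6)[of y] lin_zero[OF gens(8)] by auto
lemma ev_K1i: assumes "y \<in> V" "K1 y = sc \<mu> y" "\<mu> \<noteq> 0" shows "K1i y = sc (inverse \<mu>) y"
proof -
  have "y = K1i (sc \<mu> y)" using inv_rels(4)[OF assms(1)] assms(2) by simp
  then have "y = sc \<mu> (K1i y)" using lin_scale[OF gens(6) assms(1)] by simp
  then have "sc (inverse \<mu>) y = K1i y" using assms(3) by (metis scale_scale scale_one left_inverse)
  then show ?thesis by simp
qed
lemma ev_K2i: assumes "y \<in> V" "K2 y = sc \<mu> y" "\<mu> \<noteq> 0" shows "K2i y = sc (inverse \<mu>) y"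
proof -
  have "y = K2i (sc \<mu> y)" using inv_rels(6)[OF assms(1)] assms(2) by simp
  then have "y = sc \<mu> (K2i y)" using lin_scale[OF gens(8) assms(1)] by simp
  then have "sc (inverse \<mu>) y = K2i y" using assms(3) by (metis scale_scale scale_one left_inverse)
  then show ?thesis by simp
qed

lemma qpow_inj: "q^i = q^j \<Longrightarrow> i = j"
proof (rule ccontr)
  assume h: "q^i = q^j" "i \<noteq> j"
  { fix i j :: nat assume "q^i = q^j" "i < j"
    moreover have "q^j = q^i * q^(j-i)" using \<open>i<j\<close> by (simp add: power_add[symmetric])
    ultimately have "q^i * q^(j-i) = q^i * 1" by simp
    then have "q^(j-i) = 1" using q0 by simp
    then have False using qnr \<open>i<j\<close> by auto }
  then show False using h by (metis linorder_neqE_nat)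
qed

lemma q2pow_inj: "(q^2)^i = (q^2)^j \<Longrightarrow> i = j"
proof -
  assume "(q^2)^i = (q^2)^j"
  then have "q^(2*i) = q^(2*j)" by (simp add: power_mult)
  then have "2*i = 2*j" by (rule qpow_inj)
  then show ?thesis by simp
qed
lemma iq2pow_inj: "inverse (q^2)^i = inverse (q^2)^j \<Longrightarrow> i = j"
proof -
  assume "inverse (q^2)^i = inverse (q^2)^j"
  then have "inverse ((q^2)^i) = inverse ((q^2)^j)" by (simp only: power_inverse)
  then show ?thesis using q2pow_inj by simp
qed

lemma V_nz: "V \<noteq> {0}" using irr unfolding wq_irreducible_def by blast

lemma I_scalar: "\<exists>\<nu>. \<nu> \<noteq> 0 \<and> (\<forall>x\<in>V. I x = sc \<nu> x)"
proof -
  obtain \<nu> x where x: "x \<in> V" "x \<noteq> 0" "I x = sc \<nu> x"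
    using eig_exists[OF gens(9) subV subset_refl V_nz] lin_in[OF gens(9)] by blast
  define W where "W = {y\<in>V. I y = sc \<nu> y}"
  have sW: "subspace W" unfolding subspace_def W_def
    using subspace_0[OF subV] subspace_add[OF subV] subspace_scale[OF subV]
      lin_zero[OF gens(9)] lin_add[OF gens(9)] lin_scale[OF gens(9)]
    by (auto simp: scale_right_distrib scale_left_commute)
  have inv: "\<forall>f\<in>wq_gens r. f ` W \<subseteq> W"
  proof (intro ballI subsetI)
    fix f y assume f: "f \<in> wq_gens r" and "y \<in> f ` W"
    then obtain z where z: "z \<in> W" "y = f z" by blast
    have lf: "lin_on sc V f" using WM f unfolding wq_module_def by blast
    have "I (f z) = f (I z)" using Icomm f z unfolding W_def by blast
    also have "\<dots> = sc \<nu> (f z)" using z lin_scale[OF lf] unfolding W_def by auto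
    finally show "y \<in> W" using z lin_in[OF lf] unfolding W_def by auto
  qed
  have "W \<noteq> {0}" using x unfolding W_def by blast
  then have "W = V" using irr sW inv unfolding wq_irreducible_def W_def by blast
  moreover have "\<nu> \<noteq> 0"
  proof
    assume "\<nu> = 0"
    then have "I x = 0" using x by simp
    then have "x = Ii 0" using inv_rels(2)[OF x(1)] by simp
    then show False using x lin_zero[OF gens(10)] by simp
  qed
  ultimately show ?thesis unfolding W_def by blast
qed

lemma hw_exists: "\<exists>v0 a b. v0 \<in> V \<and> v0 \<noteq> 0 \<and> K1 v0 = sc a v0 \<and> K2 v0 = sc b v0 \<and> E1 v0 = 0 \<and> E2 v0 = 0"
proof -
  obtain a1 w1 where w1: "w1 \<in> V" "w1 \<noteq> 0" "K1 w1 = sc a1 w1"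
    using eig_exists[OF gens(5) subV subset_refl V_nz] lin_in[OF gens(5)] by blast
  define W2 where "W2 = {y\<in>V. K1 y = sc a1 y}"
  have sW: "subspace W2" unfolding subspace_def W2_def
    using subspace_0[OF subV] subspace_add[OF subV] subspace_scale[OF subV]
      lin_zero[OF gens(5)] lin_add[OF gens(5)] lin_scale[OF gens(5)]
    by (auto simp: scale_right_distrib scale_left_commute)
  have inv2: "\<And>y. y \<in> W2 \<Longrightarrow> K2 y \<in> W2"
    unfolding W2_def using comms(3) lin_in[OF gens(7)] lin_scale[OF gens(7)] by auto
  have "W2 \<noteq> {0}" using w1 unfolding W2_def by blast
  then obtain b1 w where w: "w \<in> W2" "w \<noteq> 0" "K2 w = sc b1 w"
    using eig_exists[OF gens(7) sW _ _ inv2] unfolding W2_def by blast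
  have wV: "w \<in> V" and Kw: "K1 w = sc a1 w" using w unfolding W2_def by auto
  have a1: "a1 \<noteq> 0" using ev_nz1[OF wV w(2) Kw] .
  define f where "f k = (E1^^k) w" for k
  have fV: "\<And>k. f k \<in> V" unfolding f_def using iter_V[OF gens(1) wV] .
  have fK1: "\<And>k. K1 (f k) = sc ((q^2)^k * a1) (f k)" unfolding f_def
    by (rule iter_eig[where T=K1, OF gens(1) wV Kw]) (rule ev_E1)
  have fK2: "\<And>k. K2 (f k) = sc (1^k * b1) (f k)" unfolding f_def
    by (rule iter_eig[where T=K2, OF gens(1) wV w(3)]) (simp add: comms(4) lin_scale[OF gens(1)])
  have "inj (\<lambda>k. (q^2)^k * a1)" using a1 q2pow_inj by (auto intro: injI)
  then obtain k where "f k = 0" using eig_seq_zero[where T=K1 and f=f and \<mu>="\<lambda>k. (q^2)^k * a1", OF gens(5) fV fK1] by blast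
  then obtain k0 where k0: "f k0 \<noteq> 0" "f (Suc k0) = 0" using top_exists[of f] w(2) unfolding f_def by auto
  define w' where "w' = f k0"
  have w'V: "w' \<in> V" and E1w': "E1 w' = 0" and K1w': "K1 w' = sc ((q^2)^k0 * a1) w'"
    and K2w': "K2 w' = sc b1 w'" and w'0: "w' \<noteq> 0"
    using fV k0 fK1 fK2 unfolding w'_def f_def by auto
  have b1: "b1 \<noteq> 0" using ev_nz2[OF w'V w'0 K2w'] .
  define g where "g k = (E2^^k) w'" for k
  have gV: "\<And>k. g k \<in> V" unfolding g_def using iter_V[OF gens(2) w'V] .
  have gK2: "\<And>k. K2 (g k) = sc ((q^2)^k * b1) (g k)" unfolding g_def
    by (rule iter_eig[where T=K2, OF gens(2) w'V K2w']) (rule ev_E2)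
  have gK1: "\<And>k. K1 (g k) = sc (1^k * ((q^2)^k0 * a1)) (g k)" unfolding g_def
    by (rule iter_eig[where T=K1, OF gens(2) w'V K1w']) (simp add: comms(1) lin_scale[OF gens(2)])
  have gE1: "\<And>k. E1 (g k) = 0" unfolding g_def
    using iter_comm[OF gens(2) w'V, of E1] comms(6) E1w' lin_zero[OF lin_pow[OF gens(2)]] by auto
  have "inj (\<lambda>k. (q^2)^k * b1)" using b1 q2pow_inj by (auto intro: injI)
  then obtain l where "g l = 0" using eig_seq_zero[where T=K2 and f=g and \<mu>="\<lambda>k. (q^2)^k * b1", OF gens(7) gV gK2] by blast
  then obtain l0 where l0: "g l0 \<noteq> 0" "g (Suc l0) = 0" using top_exists[of g] w'0 unfolding g_def by auto
  show ?thesis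
    apply (rule exI[of _ "g l0"], rule exI[of _ "(q^2)^k0 * a1"], rule exI[of _ "(q^2)^l0 * b1"])
    using gV l0 gK1 gK2 gE1 unfolding g_def by auto
qed


lemma c0_nz: "c0 \<noteq> 0"
proof -
  have "q^2 \<noteq> 1" using qnr by auto
  then have "q - inverse q \<noteq> 0" using q0 by (auto simp: field_simps power2_eq_square)
  then show ?thesis unfolding c0_def by simp
qed

lemma qint_nz: "0 < k \<Longrightarrow> qint q k \<noteq> 0"
proof -
  assume k: "0 < k"
  have "q^2 \<noteq> 1" using qnr by auto
  then have d: "q - inverse q \<noteq> 0" using q0 by (auto simp: field_simps power2_eq_square)
  have "q^(2*k) \<noteq> 1" using qnr k by auto
  then have "q^k - inverse q ^ k \<noteq> 0" using q0
    by (auto simp: field_simps power_mult_distrib power_mult power2_eq_square power_inverse[symmetric]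
       mult_2 power_add)
  then show ?thesis unfolding qint_def using d by simp
qed

end

lemma refl_sum: fixes Y :: complex assumes "Y \<noteq> 0"
  shows "(\<Sum>i\<le>m. Y^i) = Y^m * (\<Sum>i\<le>m. inverse Y ^ i)"
proof -
  have "Y^m * (\<Sum>i\<le>m. inverse Y ^ i) = (\<Sum>i\<le>m. Y^(m-i))"
    unfolding sum_distrib_left
  proof (rule sum.cong)
    fix i assume "i \<in> {..m}"
    then have "Y^m = Y^(m-i) * Y^i" by (simp add: power_add[symmetric])
    then show "Y^m * inverse Y ^ i = Y^(m-i)" using assms by (simp add: power_inverse[symmetric] field_simps)
  qed simp
  also have "\<dots> = (\<Sum>i<Suc m. Y^(Suc m - Suc i))" by (simp add: lessThan_Suc_atMost)
  also have "\<dots> = (\<Sum>i<Suc m. Y^i)" by (rule sum.nat_diff_reindex)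
  finally show ?thesis by (simp add: lessThan_Suc_atMost)
qed

locale hw = wq sc V B q r for sc :: "complex \<Rightarrow> 'v::ab_group_add \<Rightarrow> 'v" and V B q r +
  fixes \<nu> :: complex and v0 :: 'v and a b :: complex
  assumes nu0: "\<nu> \<noteq> 0" and Isc: "\<And>x. x \<in> V \<Longrightarrow> I x = sc \<nu> x"
   and v0V: "v0 \<in> V" and v0nz: "v0 \<noteq> 0" and K1v0: "K1 v0 = sc a v0" and K2v0: "K2 v0 = sc b v0"
   and E1v0: "E1 v0 = 0" and E2v0: "E2 v0 = 0"
begin

definition "beta1 k = (\<Sum>i\<le>k. c0 * (inverse (q^2)^i * a - \<nu> * inverse (inverse (q^2)^i * a)))"
definition "beta2 k = (\<Sum>i\<le>k. c0 * (\<nu> * (inverse (q^2)^i * b) - inverse (inverse (q^2)^i * b)))"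

lemma a0: "a \<noteq> 0" using ev_nz1[OF v0V v0nz K1v0] .
lemma b0: "b \<noteq> 0" using ev_nz2[OF v0V v0nz K2v0] .

lemma EF1_ev: assumes y: "y \<in> V" "K1 y = sc \<mu> y" "\<mu> \<noteq> 0"
  shows "E1 (F1 y) = F1 (E1 y) + sc (c0 * (\<mu> - \<nu> * inverse \<mu>)) y"
proof -
  have "I (K1i y) = sc \<nu> (sc (inverse \<mu>) y)" using ev_K1i[OF y] Isc lin_in[OF gens(6) y(1)] by simp
  then show ?thesis using EF1[OF y(1)] y(2)
    by (simp add: scale_left_diff_distrib scale_right_diff_distrib mult.assoc right_diff_distrib)
qed

lemma EF2_ev: assumes y: "y \<in> V" "K2 y = sc \<mu> y" "\<mu> \<noteq> 0"
  shows "E2 (F2 y) = F2 (E2 y) + sc (c0 * (\<nu> * \<mu> - inverse \<mu>)) y"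
proof -
  have "I (K2 y) = sc \<nu> (sc \<mu> y)" using y Isc by (simp add: subspace_scale[OF subV])
  then show ?thesis using EF2[OF y(1)] ev_K2i[OF y]
    by (simp add: scale_left_diff_distrib scale_right_diff_distrib mult.assoc right_diff_distrib)
qed

lemma E1F1: assumes u: "u \<in> V" "E1 u = 0" "K1 u = sc a u"
  shows "E1 ((F1^^Suc k) u) = sc (beta1 k) ((F1^^k) u)"
proof (induction k)
  have K: "\<And>k. K1 ((F1^^k) u) = sc (inverse (q^2)^k * a) ((F1^^k) u)"
    by (rule iter_eig[where T=K1, OF gens(3) u(1) u(3)]) (rule ev_F1)
  have nz: "\<And>k. inverse (q^2)^k * a \<noteq> 0" using a0 q0 by simp
  {
    case 0
    show ?case using EF1_ev[OF u(1) u(3) a0] u(2) lin_zero[OF gens(3)] unfolding beta1_def by simp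
  next
    case (Suc k)
    have "E1 ((F1^^Suc (Suc k)) u) = E1 (F1 ((F1^^Suc k) u))" by simp
    also have "\<dots> = F1 (E1 ((F1^^Suc k) u)) + sc (c0 * (inverse (q^2)^Suc k * a - \<nu> * inverse (inverse (q^2)^Suc k * a))) ((F1^^Suc k) u)"
      by (rule EF1_ev[OF iter_V[OF gens(3) u(1)] K nz])
    also have "F1 (E1 ((F1^^Suc k) u)) = sc (beta1 k) ((F1^^Suc k) u)"
      using Suc lin_scale[OF gens(3) iter_V[OF gens(3) u(1)]] by simp
    finally show ?case unfolding beta1_def by (simp add: scale_left_distrib)
  }
qed

lemma E2F2: "E2 ((F2^^Suc k) v0) = sc (beta2 k) ((F2^^k) v0)"
proof (induction k)
  have K: "\<And>k. K2 ((F2^^k) v0) = sc (inverse (q^2)^k * b) ((F2^^k) v0)"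
    by (rule iter_eig[where T=K2, OF gens(4) v0V K2v0]) (rule ev_F2)
  have nz: "\<And>k. inverse (q^2)^k * b \<noteq> 0" using b0 q0 by simp
  {
    case 0
    show ?case using EF2_ev[OF v0V K2v0 b0] E2v0 lin_zero[OF gens(4)] unfolding beta2_def by simp
  next
    case (Suc k)
    have "E2 ((F2^^Suc (Suc k)) v0) = E2 (F2 ((F2^^Suc k) v0))" by simp
    also have "\<dots> = F2 (E2 ((F2^^Suc k) v0)) + sc (c0 * (\<nu> * (inverse (q^2)^Suc k * b) - inverse (inverse (q^2)^Suc k * b))) ((F2^^Suc k) v0)"
      by (rule EF2_ev[OF iter_V[OF gens(4) v0V] K nz])
    also have "F2 (E2 ((F2^^Suc k) v0)) = sc (beta2 k) ((F2^^Suc k) v0)"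
      using Suc lin_scale[OF gens(4) iter_V[OF gens(4) v0V]] by simp
    finally show ?case unfolding beta2_def by (simp add: scale_left_distrib)
  }
qed

lemma F1_nilp: "\<exists>m. (F1^^m) v0 \<noteq> 0 \<and> (F1^^Suc m) v0 = 0"
proof -
  have K: "\<And>k. K1 ((F1^^k) v0) = sc (inverse (q^2)^k * a) ((F1^^k) v0)"
    by (rule iter_eig[where T=K1, OF gens(3) v0V K1v0]) (rule ev_F1)
  have "inj (\<lambda>k. inverse (q^2)^k * a)" using a0 iq2pow_inj by (auto intro: injI)
  then obtain k where "(F1^^k) v0 = 0"
    using eig_seq_zero[where T=K1 and f="\<lambda>k. (F1^^k) v0", OF gens(5) iter_V[OF gens(3) v0V] K] by blast
  then show ?thesis using top_exists[of "\<lambda>k. (F1^^k) v0"] v0nz by auto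
qed

lemma F2_nilp: "\<exists>m. (F2^^m) v0 \<noteq> 0 \<and> (F2^^Suc m) v0 = 0"
proof -
  have K: "\<And>k. K2 ((F2^^k) v0) = sc (inverse (q^2)^k * b) ((F2^^k) v0)"
    by (rule iter_eig[where T=K2, OF gens(4) v0V K2v0]) (rule ev_F2)
  have "inj (\<lambda>k. inverse (q^2)^k * b)" using b0 iq2pow_inj by (auto intro: injI)
  then obtain k where "(F2^^k) v0 = 0"
    using eig_seq_zero[where T=K2 and f="\<lambda>k. (F2^^k) v0", OF gens(7) iter_V[OF gens(4) v0V] K] by blast
  then show ?thesis using top_exists[of "\<lambda>k. (F2^^k) v0"] v0nz by auto
qed

lemma geo_nz: "(\<Sum>i\<le>m. inverse (q^2)^i) \<noteq> 0"
proof
  assume h: "(\<Sum>i\<le>m. inverse (q^2)^i) = 0"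
  have "(1 - inverse (q^2)) * (\<Sum>i\<le>m. inverse (q^2)^i) = 1 - inverse (q^2)^Suc m" by (rule sum_gp_basic)
  then have "inverse (q^2)^Suc m = inverse (q^2)^0" using h by simp
  then show False using iq2pow_inj by fastforce
qed

lemma beta1_sum: "beta1 m = c0 * (a * (\<Sum>i\<le>m. inverse (q^2)^i) - \<nu> * inverse a * (q^2)^m * (\<Sum>i\<le>m. inverse (q^2)^i))"
proof -
  have "(\<Sum>i\<le>m. (q^2)^i) = (q^2)^m * (\<Sum>i\<le>m. inverse (q^2)^i)" using refl_sum[of "q^2" m] q0 by simp
  then show ?thesis unfolding beta1_def
    by (simp add: sum_distrib_left[symmetric] sum_subtractf sum_distrib_right[symmetric] power_inverse
        algebra_simps)
qed

lemma beta2_sum: "beta2 m = c0 * (\<nu> * b * (\<Sum>i\<le>m. inverse (q^2)^i) - inverse b * (q^2)^m * (\<Sum>i\<le>m. inverse (q^2)^i))"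
proof -
  have "(\<Sum>i\<le>m. (q^2)^i) = (q^2)^m * (\<Sum>i\<le>m. inverse (q^2)^i)" using refl_sum[of "q^2" m] q0 by simp
  then show ?thesis unfolding beta2_def
    by (simp add: sum_distrib_left[symmetric] sum_subtractf sum_distrib_right[symmetric] power_inverse
        algebra_simps)
qed

lemma m_rel: assumes "(F1^^m) v0 \<noteq> 0" "(F1^^Suc m) v0 = 0" shows "a^2 = \<nu> * q^(2*m)"
proof -
  have "sc (beta1 m) ((F1^^m) v0) = 0" using E1F1[OF v0V E1v0 K1v0, of m] assms lin_zero[OF gens(1)] by simp
  then have "beta1 m = 0" using assms by simp
  then have "a * (\<Sum>i\<le>m. inverse (q^2)^i) = \<nu> * inverse a * (q^2)^m * (\<Sum>i\<le>m. inverse (q^2)^i)"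
    using c0_nz beta1_sum by simp
  then have "a = \<nu> * inverse a * (q^2)^m" using geo_nz by simp
  then show ?thesis using a0 by (simp add: field_simps power2_eq_square power_mult)
qed

lemma n_rel: assumes "(F2^^n) v0 \<noteq> 0" "(F2^^Suc n) v0 = 0" shows "\<nu> * b^2 = q^(2*n)"
proof -
  have "sc (beta2 n) ((F2^^n) v0) = 0" using E2F2[of n] assms lin_zero[OF gens(2)] by simp
  then have "beta2 n = 0" using assms by simp
  then have "\<nu> * b * (\<Sum>i\<le>n. inverse (q^2)^i) = inverse b * (q^2)^n * (\<Sum>i\<le>n. inverse (q^2)^i)"
    using c0_nz beta2_sum by simp
  then have "\<nu> * b = inverse b * (q^2)^n" using geo_nz by simp
  then show ?thesis using b0 by (simp add: field_simps power2_eq_square power_mult)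
qed


lemma iter_comm2:
  assumes A: "lin_on sc V A" and G: "lin_on sc V G" and x: "x \<in> V" and c: "\<And>y. y \<in> V \<Longrightarrow> A (G y) = G (A y)"
  shows "(A^^i) ((G^^j) x) = (G^^j) ((A^^i) x)"
proof (induction i)
  case 0 then show ?case by simp
next
  case (Suc i)
  have "A ((G^^j) ((A^^i) x)) = (G^^j) (A ((A^^i) x))"
    by (rule iter_comm[where A=A and G=G, OF G iter_V[OF A x] c])
  then show ?case using Suc by simp
qed

end

lemma qpw: fixes q :: complex assumes "q \<noteq> 0"
  shows "q powi (int m - 2 * int i) = q^m * inverse (q^2)^i"
proof -
  have e: "int (2*i) = 2 * int i" by simp
  have "q powi (int m - int (2*i)) = q powi (int m) / q powi (int (2*i))"
    using power_int_diff[of q "int m" "int (2*i)"] assms by simp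
  also have "\<dots> = q^m / q^(2*i)" by (simp only: power_int_of_nat)
  finally show ?thesis unfolding e by (simp add: power_mult divide_inverse power_inverse)
qed

lemma qpw': fixes q :: complex assumes "q \<noteq> 0"
  shows "q powi (2 * int i - int m) = inverse (q^m * inverse (q^2)^i)"
proof -
  have "2 * int i - int m = - (int m - 2 * int i)" by simp
  then have "q powi (2 * int i - int m) = inverse (q powi (int m - 2 * int i))"
    by (simp only: power_int_minus)
  then show ?thesis by (simp only: qpw[OF assms])
qed

lemma qid00:
  fixes q X Y :: complex
  assumes q0: "q \<noteq> 0" "X \<noteq> 0" "Y \<noteq> 0" and d: "q*q - 1 \<noteq> 0"
  shows "(q*q*X - inverse (q*q*X)) * (Y - inverse Y) / (q - inverse q)^2 = (q*X - inverse (q*X)) * (q*Y - inverse (q*Y)) / (q - inverse q)^2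
      + ((q*X*Y) * inverse (q*q*X*X) - (q*q*X*X) * inverse (q*X*Y)) / (q - inverse q)"
proof -
  have d': "q - inverse q \<noteq> 0" using q0 d by (auto simp: field_simps)
  show ?thesis using q0 d d' by (simp add: field_simps) algebra
qed

lemma qid0:
  fixes q X Y :: complex
  assumes q0: "q \<noteq> 0" "X \<noteq> 0" "Y \<noteq> 0" and d: "q*q - 1 \<noteq> 0"
  shows "(q*q*X - inverse (q*q*X)) / (q - inverse q) * ((Y - inverse Y) / (q - inverse q)) =
     (q*X - inverse (q*X)) / (q - inverse q) * ((q*Y - inverse (q*Y)) / (q - inverse q))
      + inverse (q - inverse q) * ((q*X*Y) * inverse (q*q*X*X) - inverse ((q*X*Y) * inverse (q*q*X*X)))"
proof -
  have e1: "\<And>A B D::complex. A / D * (B / D) = A * B / D^2" by (simp add: power2_eq_square)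
  have e3: "inverse (q - inverse q) * ((q*X*Y) * inverse (q*q*X*X) - inverse ((q*X*Y) * inverse (q*q*X*X)))
     = ((q*X*Y) * inverse (q*q*X*X) - (q*q*X*X) * inverse (q*X*Y)) / (q - inverse q)"
    by (simp add: divide_inverse mult.commute)
  show ?thesis unfolding e1 e3 by (rule qid00[OF assms])
qed

context wq begin

definition "Gs M k = (\<Sum>i\<le>k. c0 * (q^M * inverse (q^2)^i - inverse (q^M * inverse (q^2)^i)))"

lemma Gs_qint: "k \<le> M \<Longrightarrow> Gs M k = qint q (Suc k) * qint q (M - k)"
proof (induction k)
  have q2: "q^2 \<noteq> 1" using qnr by auto
  then have d: "q - inverse q \<noteq> 0" using q0 by (auto simp: field_simps power2_eq_square)
  {
    case 0
    show ?case unfolding Gs_def qint_def c0_def using d by (simp add: field_simps power_inverse)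
  next
    case (Suc k)
    have "k < M" using Suc.prems by simp
    then obtain j where "M = Suc (k + j)" using less_imp_Suc_add by blast
    then have M: "M = Suc k + j" by simp
    have "Gs M (Suc k) = Gs M k + c0 * (q^M * inverse (q^2)^Suc k - inverse (q^M * inverse (q^2)^Suc k))"
      unfolding Gs_def by simp
    also have "Gs M k = qint q (Suc k) * qint q (M - k)" using Suc by simp
    finally have e: "Gs M (Suc k) = qint q (Suc k) * qint q (M - k) + c0 * (q^M * inverse (q^2)^Suc k - inverse (q^M * inverse (q^2)^Suc k))" .
    have d2: "q*q - 1 \<noteq> 0" using q2 by (auto simp: power2_eq_square)
    define X where "X = q^k"
    define Y where "Y = q^j"
    have X0: "X \<noteq> 0" and Y0: "Y \<noteq> 0" using q0 unfolding X_def Y_def by auto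
    have pinv: "\<And>t. inverse q ^ t = inverse (q ^ t)" by (simp add: power_inverse)
    have h1: "qint q (Suc (Suc k)) = (q*q*X - inverse (q*q*X)) / (q - inverse q)"
      unfolding qint_def X_def pinv by (simp add: mult.assoc)
    have h2: "qint q (M - Suc k) = (Y - inverse Y) / (q - inverse q)"
      unfolding qint_def Y_def pinv M by simp
    have h3: "qint q (Suc k) = (q*X - inverse (q*X)) / (q - inverse q)"
      unfolding qint_def X_def pinv by simp
    have h4: "qint q (M - k) = (q*Y - inverse (q*Y)) / (q - inverse q)"
      unfolding qint_def Y_def pinv M by simp
    have h5: "q^M = q*X*Y" unfolding M X_def Y_def by (simp add: power_add)
    have h6: "inverse (q^2)^Suc k = inverse (q*q*X*X)"
      unfolding X_def pinv[symmetric] by (simp add: power2_eq_square power_mult_distrib mult_ac power_inverse)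
    have "qint q (Suc (Suc k)) * qint q (M - Suc k) = qint q (Suc k) * qint q (M - k) + c0 * (q^M * inverse (q^2)^Suc k - inverse (q^M * inverse (q^2)^Suc k))"
      unfolding h1 h2 h3 h4 h5 h6 c0_def by (rule qid0[OF q0 X0 Y0 d2])
    then show ?case using e by simp
  }
qed

end

locale hw2 = hw sc V B q r \<nu> v0 a b for sc :: "complex \<Rightarrow> 'v::ab_group_add \<Rightarrow> 'v" and V B q r \<nu> v0 a b +
  fixes m n :: nat and lam d :: complex
  assumes Fm: "(F1^^Suc m) v0 = 0" and Fn: "(F2^^Suc n) v0 = 0"
   and ha: "a = lam * q^m" and hb: "b = d * inverse lam * q^n"
   and hnu: "\<nu> = lam^2" and d1: "d \<in> {1,-1}" and lam0: "lam \<noteq> 0"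
begin

lemma dinv: "inverse d = d" using d1 by auto
lemma d0: "d \<noteq> 0" using d1 by auto

lemma beta1_G: "beta1 k = lam * Gs m k"
  unfolding beta1_def Gs_def sum_distrib_left unfolding ha hnu
  by (rule sum.cong) (use lam0 q0 in \<open>auto simp: field_simps power2_eq_square\<close>)

lemma beta2_G: "beta2 k = d * lam * Gs n k"
  unfolding beta2_def Gs_def sum_distrib_left unfolding hb hnu
  by (rule sum.cong) (use lam0 q0 d0 dinv in \<open>auto simp: field_simps power2_eq_square\<close>)

lemma beta1_q: "k \<le> m \<Longrightarrow> beta1 k = lam * qint q (Suc k) * qint q (m - k)"
  using beta1_G Gs_qint by simp
lemma beta2_q: "k \<le> n \<Longrightarrow> beta2 k = d * lam * qint q (Suc k) * qint q (n - k)"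
  using beta2_G Gs_qint by simp

lemma beta1_nz: "k < m \<Longrightarrow> beta1 k \<noteq> 0"
  using beta1_q[of k] lam0 qint_nz[of "Suc k"] qint_nz[of "m - k"] by simp
lemma beta2_nz: "k < n \<Longrightarrow> beta2 k \<noteq> 0"
  using beta2_q[of k] lam0 d0 qint_nz[of "Suc k"] qint_nz[of "n - k"] by simp

definition "u j = (F2^^j) v0"
definition "vv i j = (F1^^i) (u j)"

lemma uV: "u j \<in> V" unfolding u_def using iter_V[OF gens(4) v0V] .
lemma vvV: "vv i j \<in> V" unfolding vv_def using iter_V[OF gens(3) uV] .

lemma u_K1: "K1 (u j) = sc a (u j)"
  unfolding u_def using iter_eig[where T=K1 and c=1, OF gens(4) v0V K1v0] comms(2) lin_scale[OF gens(4)] by simp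
lemma u_E1: "E1 (u j) = 0"
  unfolding u_def using iter_comm[OF gens(4) v0V, of E1] comms(7) E1v0 lin_zero[OF lin_pow[OF gens(4)]] by simp
lemma u_K2: "K2 (u j) = sc (inverse (q^2)^j * b) (u j)"
  unfolding u_def by (rule iter_eig[where T=K2, OF gens(4) v0V K2v0]) (rule ev_F2)
lemma vv_K1: "K1 (vv i j) = sc (inverse (q^2)^i * a) (vv i j)"
  unfolding vv_def by (rule iter_eig[where T=K1, OF gens(3) uV u_K1]) (rule ev_F1)
lemma vv_K2: "K2 (vv i j) = sc (inverse (q^2)^j * b) (vv i j)"
  unfolding vv_def using iter_eig[where T=K2 and c=1, OF gens(3) uV u_K2] comms(5) lin_scale[OF gens(3)] by simp

lemma vv_K1': "K1 (vv i j) = sc (lam * q powi (int m - 2 * int i)) (vv i j)"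
  using vv_K1 qpw[OF q0] ha by (simp add: mult_ac)
lemma vv_K2': "K2 (vv i j) = sc (d * inverse lam * q powi (int n - 2 * int j)) (vv i j)"
  using vv_K2 qpw[OF q0] hb by (simp add: mult_ac)
lemma vv_K1i: "K1i (vv i j) = sc (inverse lam * q powi (2 * int i - int m)) (vv i j)"
proof -
  have "lam * q powi (int m - 2 * int i) \<noteq> 0" using lam0 q0 by simp
  then show ?thesis using ev_K1i[OF vvV vv_K1'] qpw[OF q0] qpw'[OF q0] by (simp add: mult_ac)
qed
lemma vv_K2i: "K2i (vv i j) = sc (inverse d * lam * q powi (2 * int j - int n)) (vv i j)"
proof -
  have "d * inverse lam * q powi (int n - 2 * int j) \<noteq> 0" using lam0 q0 d0 by simp
  then show ?thesis using ev_K2i[OF vvV vv_K2'] qpw[OF q0] qpw'[OF q0] by (simp add: mult_ac)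
qed
lemma vv_I: "I (vv i j) = sc (lam^2) (vv i j)" using Isc[OF vvV] hnu by simp
lemma vv_Ii: "Ii (vv i j) = sc (inverse (lam^2)) (vv i j)"
proof -
  have "vv i j = Ii (sc (lam^2) (vv i j))" using inv_rels(2)[OF vvV] vv_I by simp
  then have "vv i j = sc (lam^2) (Ii (vv i j))" using lin_scale[OF gens(10) vvV] by simp
  then have "sc (inverse (lam^2)) (vv i j) = sc (inverse (lam^2) * lam^2) (Ii (vv i j))" by (metis scale_scale)
  then have "sc (inverse (lam^2)) (vv i j) = Ii (vv i j)" using lam0 by simp
  then show ?thesis by simp
qed

lemma vv_F1: "F1 (vv i j) = vv (Suc i) j" unfolding vv_def by simp
lemma vv_F2: "F2 (vv i j) = vv i (Suc j)"
  unfolding vv_def u_def using iter_comm[OF gens(3) iter_V[OF gens(4) v0V], of F2] comms(9) by simp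
lemma vv_top1: "vv (Suc m) j = 0"
  unfolding vv_def u_def using iter_comm2[OF gens(3) gens(4) v0V, of "Suc m" j] comms(9) Fm
    lin_zero[OF lin_pow[OF gens(4)]] by simp
lemma vv_top2: "vv i (Suc n) = 0"
  unfolding vv_def u_def using Fn lin_zero[OF lin_pow[OF gens(3)]] by simp
lemma vv_E1: "E1 (vv (Suc i) j) = sc (beta1 i) (vv i j)"
  unfolding vv_def using E1F1[OF uV u_E1 u_K1] .
lemma vv_E1_0: "E1 (vv 0 j) = 0" unfolding vv_def using u_E1 by simp
lemma vv_E2: "E2 (vv i (Suc j)) = sc (beta2 j) (vv i j)"
proof -
  have "E2 (vv i (Suc j)) = (F1^^i) (E2 (u (Suc j)))"
    unfolding vv_def using iter_comm[OF gens(3) uV, of E2] comms(8) by simp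
  also have "\<dots> = (F1^^i) (sc (beta2 j) (u j))" using E2F2 unfolding u_def by simp
  also have "\<dots> = sc (beta2 j) (vv i j)" unfolding vv_def using iter_lin[OF gens(3) uV] by simp
  finally show ?thesis .
qed
lemma vv_E2_0: "E2 (vv i 0) = 0"
  unfolding vv_def u_def using iter_comm[OF gens(3) v0V, of E2] comms(8) E2v0 lin_zero[OF lin_pow[OF gens(3)]] by simp

lemma u_nz: "j \<le> n \<Longrightarrow> u j \<noteq> 0"
proof (induction j)
  case 0 then show ?case using v0nz unfolding u_def by simp
next
  case (Suc j)
  show ?case
  proof
    assume h: "u (Suc j) = 0"
    have "E2 (u (Suc j)) = sc (beta2 j) (u j)" using E2F2 unfolding u_def by simp
    then have "sc (beta2 j) (u j) = 0" using h lin_zero[OF gens(2)] by simp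
    then show False using beta2_nz[of j] Suc by simp
  qed
qed

lemma vv_nz: "i \<le> m \<Longrightarrow> j \<le> n \<Longrightarrow> vv i j \<noteq> 0"
proof (induction i)
  case 0 then show ?case using u_nz unfolding vv_def by simp
next
  case (Suc i)
  show ?case
  proof
    assume h: "vv (Suc i) j = 0"
    then have "sc (beta1 i) (vv i j) = 0" using vv_E1[of i j] lin_zero[OF gens(1)] by simp
    then show False using beta1_nz[of i] Suc by simp
  qed
qed


definition "phi f = (\<Sum>i\<le>m. \<Sum>j\<le>n. sc (f (i,j)) (vv i j))"

lemma phiV: "phi f \<in> V"
  unfolding phi_def by (intro subspace_sum[OF subV] subspace_scale[OF subV] vvV)

lemma phi_add: "phi (f + g) = phi f + phi g"
  unfolding phi_def by (simp add: scale_left_distrib sum.distrib)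
lemma phi_scale: "phi (fscale c f) = sc c (phi f)"
  unfolding phi_def fscale_def by (simp add: scale_sum_right)
lemma phi_diff: "phi (f - g) = phi f - phi g"
  unfolding phi_def by (simp add: scale_left_diff_distrib sum_subtractf)
lemma phi_zero: "phi 0 = 0"
  unfolding phi_def by simp

lemma lin_phi: assumes T: "lin_on sc V T"
  shows "T (phi f) = (\<Sum>i\<le>m. \<Sum>j\<le>n. sc (f (i,j)) (T (vv i j)))"
proof -
  have "T (phi f) = (\<Sum>i\<le>m. T (\<Sum>j\<le>n. sc (f (i,j)) (vv i j)))"
    unfolding phi_def by (rule lin_sum[OF T]) (intro subspace_sum[OF subV] subspace_scale[OF subV] vvV)
  also have "\<dots> = (\<Sum>i\<le>m. \<Sum>j\<le>n. T (sc (f (i,j)) (vv i j)))"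
    by (intro sum.cong refl lin_sum[OF T] subspace_scale[OF subV] vvV)
  also have "\<dots> = (\<Sum>i\<le>m. \<Sum>j\<le>n. sc (f (i,j)) (T (vv i j)))"
    by (intro sum.cong refl lin_scale[OF T] vvV)
  finally show ?thesis .
qed

abbreviation "Lo \<equiv> Lops q m n d lam"

lemma phi_K1: "K1 (phi f) = phi (opK1 Lo f)"
  unfolding lin_phi[OF gens(5)] unfolding phi_def by (simp add: vv_K1' Lops_def mult_ac)
lemma phi_K1i: "K1i (phi f) = phi (opK1i Lo f)"
  unfolding lin_phi[OF gens(6)] unfolding phi_def by (simp add: vv_K1i Lops_def mult_ac)
lemma phi_K2: "K2 (phi f) = phi (opK2 Lo f)"
  unfolding lin_phi[OF gens(7)] unfolding phi_def by (simp add: vv_K2' Lops_def mult_ac)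
lemma phi_K2i: "K2i (phi f) = phi (opK2i Lo f)"
  unfolding lin_phi[OF gens(8)] unfolding phi_def by (simp add: vv_K2i Lops_def mult_ac)
lemma phi_I: "I (phi f) = phi (opI Lo f)"
  unfolding lin_phi[OF gens(9)] unfolding phi_def by (simp add: vv_I Lops_def mult_ac)
lemma phi_Ii: "Ii (phi f) = phi (opIi Lo f)"
  unfolding lin_phi[OF gens(10)] unfolding phi_def by (simp add: vv_Ii Lops_def mult_ac)

lemma sum_shift_down: "g 0 = 0 \<Longrightarrow> (\<Sum>i\<le>k. g i) = (\<Sum>i<k. g (Suc i))"
  unfolding lessThan_Suc_atMost[symmetric] sum.lessThan_Suc_shift by simp
lemma sum_drop_last: "g (k::nat) = 0 \<Longrightarrow> (\<Sum>i\<le>k. g i) = (\<Sum>i<k. (g i :: 'w::comm_monoid_add))"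
proof -
  assume "g k = 0"
  moreover have "{..k} = insert k {..<k}" by auto
  ultimately show ?thesis by simp
qed

lemma phi_F1: "F1 (phi f) = phi (opF1 Lo f)"
proof -
  have "F1 (phi f) = (\<Sum>i\<le>m. \<Sum>j\<le>n. sc (f (i,j)) (vv (Suc i) j))"
    unfolding lin_phi[OF gens(3)] vv_F1 ..
  also have "\<dots> = (\<Sum>i<m. \<Sum>j\<le>n. sc (f (i,j)) (vv (Suc i) j))"
    by (rule sum_drop_last) (simp add: vv_top1)
  also have "\<dots> = (\<Sum>i\<le>m. \<Sum>j\<le>n. sc (opF1 Lo f (i,j)) (vv i j))"
    by (subst sum_shift_down) (auto simp: Lops_def intro!: sum.cong)
  finally show ?thesis unfolding phi_def .
qed

lemma phi_E1: "E1 (phi f) = phi (opE1 Lo f)"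
proof -
  have "E1 (phi f) = (\<Sum>i\<le>m. \<Sum>j\<le>n. sc (f (i,j)) (E1 (vv i j)))"
    unfolding lin_phi[OF gens(1)] ..
  also have "\<dots> = (\<Sum>i<m. \<Sum>j\<le>n. sc (f (Suc i,j)) (E1 (vv (Suc i) j)))"
    by (rule sum_shift_down) (simp add: vv_E1_0)
  also have "\<dots> = (\<Sum>i<m. \<Sum>j\<le>n. sc (opE1 Lo f (i,j)) (vv i j))"
    by (intro sum.cong refl) (simp add: vv_E1 Lops_def beta1_q mult_ac)
  also have "\<dots> = (\<Sum>i\<le>m. \<Sum>j\<le>n. sc (opE1 Lo f (i,j)) (vv i j))"
    by (rule sum_drop_last[symmetric]) (simp add: Lops_def)
  finally show ?thesis unfolding phi_def .
qed

lemma phi_F2: "F2 (phi f) = phi (opF2 Lo f)"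
proof -
  have "F2 (phi f) = (\<Sum>i\<le>m. \<Sum>j\<le>n. sc (f (i,j)) (vv i (Suc j)))"
    unfolding lin_phi[OF gens(4)] vv_F2 ..
  also have "\<dots> = (\<Sum>i\<le>m. \<Sum>j<n. sc (f (i,j)) (vv i (Suc j)))"
    by (intro sum.cong refl sum_drop_last) (simp add: vv_top2)
  also have "\<dots> = (\<Sum>i\<le>m. \<Sum>j\<le>n. sc (opF2 Lo f (i,j)) (vv i j))"
    apply (rule sum.cong[OF refl])
    apply (subst sum_shift_down)
     apply (auto simp: Lops_def intro!: sum.cong)
    done
  finally show ?thesis unfolding phi_def .
qed

lemma phi_E2: "E2 (phi f) = phi (opE2 Lo f)"
proof -
  have "E2 (phi f) = (\<Sum>i\<le>m. \<Sum>j\<le>n. sc (f (i,j)) (E2 (vv i j)))"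
    unfolding lin_phi[OF gens(2)] ..
  also have "\<dots> = (\<Sum>i\<le>m. \<Sum>j<n. sc (f (i,Suc j)) (E2 (vv i (Suc j))))"
    by (intro sum.cong refl sum_shift_down) (simp add: vv_E2_0)
  also have "\<dots> = (\<Sum>i\<le>m. \<Sum>j<n. sc (opE2 Lo f (i,j)) (vv i j))"
    by (intro sum.cong refl) (simp add: vv_E2 Lops_def beta2_q mult_ac)
  also have "\<dots> = (\<Sum>i\<le>m. \<Sum>j\<le>n. sc (opE2 Lo f (i,j)) (vv i j))"
    by (intro sum.cong refl sum_drop_last[symmetric]) (simp add: Lops_def)
  finally show ?thesis unfolding phi_def .
qed


abbreviation "L \<equiv> Lcarrier m n"

lemma L_closed:
  assumes f: "f \<in> L"
  shows "opE1 Lo f \<in> L" "opE2 Lo f \<in> L" "opF1 Lo f \<in> L" "opF2 Lo f \<in> L"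
    "opK1 Lo f \<in> L" "opK1i Lo f \<in> L" "opK2 Lo f \<in> L" "opK2i Lo f \<in> L" "opI Lo f \<in> L" "opIi Lo f \<in> L"
  using f unfolding Lcarrier_def Lops_def by auto

lemma L_add: "f \<in> L \<Longrightarrow> g \<in> L \<Longrightarrow> f + g \<in> L" unfolding Lcarrier_def by auto
lemma L_scale: "f \<in> L \<Longrightarrow> fscale c f \<in> L" unfolding Lcarrier_def fscale_def by auto
lemma L_diff: "f \<in> L \<Longrightarrow> g \<in> L \<Longrightarrow> f - g \<in> L" unfolding Lcarrier_def by auto
lemma L_zero: "0 \<in> L" unfolding Lcarrier_def by auto

lemma phi_ker: assumes f: "f \<in> L" and z: "phi f = 0" shows "f = 0"
proof -
  define w where "w i = (\<Sum>j\<le>n. sc (f (i,j)) (vv i j))" for i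
  have wV: "\<And>i. w i \<in> V" unfolding w_def by (intro subspace_sum[OF subV] subspace_scale[OF subV] vvV)
  have wK: "\<And>i. K1 (w i) = sc (inverse (q^2)^i * a) (w i)"
  proof -
    fix i
    have "K1 (w i) = (\<Sum>j\<le>n. K1 (sc (f (i,j)) (vv i j)))"
      unfolding w_def by (rule lin_sum[OF gens(5)]) (intro subspace_scale[OF subV] vvV)
    also have "\<dots> = (\<Sum>j\<le>n. sc (inverse (q^2)^i * a) (sc (f (i,j)) (vv i j)))"
      by (intro sum.cong refl) (simp add: lin_scale[OF gens(5) vvV] vv_K1 mult.commute)
    finally show "K1 (w i) = sc (inverse (q^2)^i * a) (w i)" unfolding w_def by (simp add: scale_sum_right)
  qed
  have inj1: "inj_on (\<lambda>i. inverse (q^2)^i * a) {..m}" using a0 iq2pow_inj by (auto intro: inj_onI)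
  have "sum w {..m} = 0" using z unfolding phi_def w_def .
  then have w0: "\<forall>i\<in>{..m}. w i = 0"
    using eig_sum_zero[where w=w and \<mu>="\<lambda>i. inverse (q^2)^i * a", OF gens(5) finite_atMost] wV wK inj1 by blast
  have inj2: "inj_on (\<lambda>j. inverse (q^2)^j * b) {..n}" using b0 iq2pow_inj by (auto intro: inj_onI)
  have fz: "f (i,j) = 0" if ij: "i \<le> m" "j \<le> n" for i j
  proof -
    have "(\<Sum>j\<le>n. sc (f (i,j)) (vv i j)) = 0" using w0 ij unfolding w_def by simp
    moreover have "\<And>j. sc (f (i,j)) (vv i j) \<in> V \<and> K2 (sc (f (i,j)) (vv i j)) = sc (inverse (q^2)^j * b) (sc (f (i,j)) (vv i j))"
      by (simp add: subspace_scale[OF subV] vvV lin_scale[OF gens(7) vvV] vv_K2 mult.commute)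
    ultimately have "\<forall>j\<in>{..n}. sc (f (i,j)) (vv i j) = 0"
      using eig_sum_zero[where w="\<lambda>j. sc (f (i,j)) (vv i j)" and \<mu>="\<lambda>j. inverse (q^2)^j * b", OF gens(7) finite_atMost] inj2 by blast
    then show ?thesis using vv_nz[OF ij] ij by auto
  qed
  show ?thesis
  proof (rule ext)
    fix p :: "nat \<times> nat"
    obtain i j where p: "p = (i,j)" by fastforce
    show "f p = 0 p"
    proof (cases "i \<le> m \<and> j \<le> n")
      case True then show ?thesis using fz p by simp
    next
      case False then show ?thesis using f p unfolding Lcarrier_def by auto
    qed
  qed
qed

lemma phi_inj: "inj_on phi L"
proof (rule inj_onI)
  fix f g assume fg: "f \<in> L" "g \<in> L" "phi f = phi g"
  then have "phi (f - g) = 0" using phi_diff by simp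
  then have "f - g = 0" using phi_ker L_diff fg by blast
  then show "f = g" by simp
qed

lemma phi_img: "phi ` L = V"
proof -
  define W where "W = phi ` L"
  have sW: "subspace W" unfolding subspace_def W_def
  proof (intro conjI ballI allI)
    show "0 \<in> phi ` L" using phi_zero L_zero by (metis rev_image_eqI)
  next
    fix x y assume "x \<in> phi ` L" "y \<in> phi ` L"
    then obtain f g where fg: "f \<in> L" "g \<in> L" "x = phi f" "y = phi g" by blast
    have "phi (f+g) \<in> phi ` L" using L_add[OF fg(1,2)] by blast
    then show "x + y \<in> phi ` L" using phi_add[of f g] fg by simp
  next
    fix c x assume "x \<in> phi ` L"
    then obtain f where f: "f \<in> L" "x = phi f" by blast
    have "phi (fscale c f) \<in> phi ` L" using L_scale[OF f(1)] by blast
    then show "sc c x \<in> phi ` L" using phi_scale[of c f] f by simp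
  qed
  have WV: "W \<subseteq> V" unfolding W_def using phiV by blast
  have inv: "\<forall>g\<in>wq_gens r. g ` W \<subseteq> W"
  proof (intro ballI subsetI)
    fix g y assume g: "g \<in> wq_gens r" and "y \<in> g ` W"
    then obtain f where f: "f \<in> L" "y = g (phi f)" unfolding W_def by blast
    from g have "g = E1 \<or> g = E2 \<or> g = F1 \<or> g = F2 \<or> g = K1 \<or> g = K1i \<or> g = K2 \<or> g = K2i \<or> g = I \<or> g = Ii"
      unfolding wq_gens_def by auto
    moreover have mem: "\<And>h. h \<in> L \<Longrightarrow> phi h \<in> W" unfolding W_def by blast
    ultimately show "y \<in> W" using f(2) L_closed[OF f(1)]
      by (elim disjE) (simp_all add: mem phi_E1 phi_E2 phi_F1 phi_F2 phi_K1 phi_K1i phi_K2 phi_K2i phi_I phi_Ii)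
  qed
  define e where "e = (\<lambda>p::nat\<times>nat. if p = (0,0) then (1::complex) else 0)"
  have eL: "e \<in> L" unfolding e_def Lcarrier_def by simp
  have e00: "e (0,0) = 1" unfolding e_def by simp
  have "e \<noteq> 0"
  proof
    assume "e = 0"
    then have "e (0,0) = 0" by simp
    then show False using e00 by simp
  qed
  then have "phi e \<noteq> 0" using phi_ker eL by blast
  then have "W \<noteq> {0}" using eL unfolding W_def by blast
  then have "W = V" using irr sW WV inv unfolding wq_irreducible_def by blast
  then show ?thesis unfolding W_def .
qed

lemma iso: "wq_iso sc V r fscale L Lo"
proof -
  define psi where "psi = inv_into L phi"
  have bij: "bij_betw phi L V" using phi_inj phi_img by (simp add: bij_betw_def)
  have pb: "bij_betw psi V L" unfolding psi_def by (rule bij_betw_inv_into[OF bij])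
  have pL: "\<And>x. x \<in> V \<Longrightarrow> psi x \<in> L" using pb bij_betwE by blast
  have pp: "\<And>x. x \<in> V \<Longrightarrow> phi (psi x) = x" unfolding psi_def using phi_img f_inv_into_f by metis
  have pq: "\<And>z. z \<in> L \<Longrightarrow> psi (phi z) = z" unfolding psi_def using phi_inj inv_into_f_f by metis
  have tr: "psi (g x) = G (psi x)" if x: "x \<in> V" and GL: "\<And>f. f \<in> L \<Longrightarrow> G f \<in> L"
     and c: "\<And>f. g (phi f) = phi (G f)" for g G x
  proof -
    have "psi (g x) = psi (g (phi (psi x)))" using pp x by simp
    also have "\<dots> = psi (phi (G (psi x)))" using c by simp
    also have "\<dots> = G (psi x)" using pq GL pL x by blast
    finally show ?thesis .
  qed
  show ?thesis unfolding wq_iso_def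
  proof (intro exI[of _ psi] conjI ballI allI)
    show "bij_betw psi V L" by (rule pb)
  next
    fix x y assume x: "x \<in> V" and y: "y \<in> V"
    have "psi (x + y) = psi (phi (psi x) + phi (psi y))" using pp x y by simp
    also have "\<dots> = psi (phi (psi x + psi y))" using phi_add by simp
    also have "\<dots> = psi x + psi y" using pq L_add pL x y by blast
    finally show "psi (x + y) = psi x + psi y" .
  next
    fix c x assume x: "x \<in> V"
    have "psi (sc c x) = psi (sc c (phi (psi x)))" using pp x by simp
    also have "\<dots> = psi (phi (fscale c (psi x)))" using phi_scale by simp
    also have "\<dots> = fscale c (psi x)" using pq L_scale pL x by blast
    finally show "psi (sc c x) = fscale c (psi x)" .
  next
    fix x assume x: "x \<in> V"
    show "psi (E1 x) = opE1 Lo (psi x)" by (rule tr[OF x]) (auto intro: L_closed simp: phi_E1)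
    show "psi (E2 x) = opE2 Lo (psi x)" by (rule tr[OF x]) (auto intro: L_closed simp: phi_E2)
    show "psi (F1 x) = opF1 Lo (psi x)" by (rule tr[OF x]) (auto intro: L_closed simp: phi_F1)
    show "psi (F2 x) = opF2 Lo (psi x)" by (rule tr[OF x]) (auto intro: L_closed simp: phi_F2)
    show "psi (K1 x) = opK1 Lo (psi x)" by (rule tr[OF x]) (auto intro: L_closed simp: phi_K1)
    show "psi (K1i x) = opK1i Lo (psi x)" by (rule tr[OF x]) (auto intro: L_closed simp: phi_K1i)
    show "psi (K2 x) = opK2 Lo (psi x)" by (rule tr[OF x]) (auto intro: L_closed simp: phi_K2)
    show "psi (K2i x) = opK2i Lo (psi x)" by (rule tr[OF x]) (auto intro: L_closed simp: phi_K2i)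
    show "psi (I x) = opI Lo (psi x)" by (rule tr[OF x]) (auto intro: L_closed simp: phi_I)
    show "psi (Ii x) = opIi Lo (psi x)" by (rule tr[OF x]) (auto intro: L_closed simp: phi_Ii)
  qed
qed

end

context hw begin

lemma hw_iso: "\<exists>m n d lam. d \<in> {1,-1} \<and> lam \<noteq> 0 \<and> wq_iso sc V r fscale (Lcarrier m n) (Lops q m n d lam)"
proof -
  obtain m where m: "(F1^^m) v0 \<noteq> 0" "(F1^^Suc m) v0 = 0" using F1_nilp by blast
  obtain n where n: "(F2^^n) v0 \<noteq> 0" "(F2^^Suc n) v0 = 0" using F2_nilp by blast
  have am: "a^2 = \<nu> * q^(2*m)" using m_rel[OF m] .
  have bn: "\<nu> * b^2 = q^(2*n)" using n_rel[OF n] .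
  define lam where "lam = a / q^m"
  define d where "d = b * lam / q^n"
  have qm: "q^m \<noteq> 0" "q^n \<noteq> 0" using q0 by auto
  have lam0: "lam \<noteq> 0" unfolding lam_def using a0 qm by simp
  have hnu: "\<nu> = lam^2" unfolding lam_def using am qm q0
    by (simp add: power_divide power_mult field_simps power2_eq_square)
  have "d^2 = 1" unfolding d_def using bn hnu qm
    by (simp add: power_divide power_mult power_mult_distrib field_simps power2_eq_square)
  then have d1: "d \<in> {1,-1}" by (auto simp: power2_eq_1_iff)
  have ha: "a = lam * q^m" unfolding lam_def using qm by simp
  have hb: "b = d * inverse lam * q^n" unfolding d_def using qm lam0 by (simp add: field_simps)
  interpret H2: hw2 sc V B q r \<nu> v0 a b m n lam d
    by unfold_locales (use m(2) n(2) ha hb hnu d1 lam0 in auto)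
  show ?thesis using H2.iso d1 lam0 by blast
qed

end

context wq begin

lemma wq_exists: "\<exists>m n d lam. d \<in> {1,-1} \<and> lam \<noteq> 0 \<and> wq_iso sc V r fscale (Lcarrier m n) (Lops q m n d lam)"
proof -
  obtain \<nu> where nu: "\<nu> \<noteq> 0" "\<forall>x\<in>V. I x = sc \<nu> x" using I_scalar by blast
  obtain v0 a b where v: "v0 \<in> V" "v0 \<noteq> 0" "K1 v0 = sc a v0" "K2 v0 = sc b v0" "E1 v0 = 0" "E2 v0 = 0"
    using hw_exists by blast
  interpret H: hw sc V B q r \<nu> v0 a b
    by unfold_locales (use nu v in auto)
  show ?thesis by (rule H.hw_iso)
qed

end

definition evs :: "(complex \<Rightarrow> 'v::ab_group_add \<Rightarrow> 'v) \<Rightarrow> 'v set \<Rightarrow> ('v \<Rightarrow> 'v) \<Rightarrow> complex set" where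
  "evs sc V g = {\<mu>. \<exists>x\<in>V. x \<noteq> 0 \<and> g x = sc \<mu> x}"

lemma evs_iso:
  fixes sc :: "complex \<Rightarrow> 'v::ab_group_add \<Rightarrow> 'v" and sc' :: "complex \<Rightarrow> 'w::ab_group_add \<Rightarrow> 'w"
  assumes bij: "bij_betw \<psi> V W" and add: "\<forall>x\<in>V. \<forall>y\<in>V. \<psi> (x+y) = \<psi> x + \<psi> y"
    and scl: "\<forall>c. \<forall>x\<in>V. \<psi> (sc c x) = sc' c (\<psi> x)"
    and gV: "\<forall>x\<in>V. g x \<in> V" and scV: "\<forall>c. \<forall>x\<in>V. sc c x \<in> V" and z: "0 \<in> V"
    and com: "\<forall>x\<in>V. \<psi> (g x) = G (\<psi> x)"
  shows "evs sc V g = evs sc' W G"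
proof -
  have p0: "\<psi> 0 = 0"
  proof -
    have "\<psi> (0 + 0) = \<psi> 0 + \<psi> 0" using add z by blast
    then show ?thesis by simp
  qed
  have inj: "inj_on \<psi> V" using bij unfolding bij_betw_def by blast
  have img: "\<psi> ` V = W" using bij unfolding bij_betw_def by blast
  have A: "\<mu> \<in> evs sc' W G" if mu: "\<mu> \<in> evs sc V g" for \<mu>
  proof -
    obtain x where x: "x \<in> V" "x \<noteq> 0" "g x = sc \<mu> x" using mu unfolding evs_def by blast
    have "\<psi> x \<noteq> 0"
    proof
      assume "\<psi> x = 0"
      then have "\<psi> x = \<psi> 0" using p0 by simp
      then have "x = 0" using inj x(1) z unfolding inj_on_def by blast
      then show False using x(2) by simp
    qed
    moreover have "G (\<psi> x) = sc' \<mu> (\<psi> x)"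
    proof -
      have "G (\<psi> x) = \<psi> (g x)" using com x(1) by simp
      also have "\<dots> = \<psi> (sc \<mu> x)" using x(3) by simp
      also have "\<dots> = sc' \<mu> (\<psi> x)" using scl x(1) by simp
      finally show ?thesis .
    qed
    moreover have "\<psi> x \<in> W" using img x(1) by blast
    ultimately show ?thesis unfolding evs_def by blast
  qed
  have B: "\<mu> \<in> evs sc V g" if mu: "\<mu> \<in> evs sc' W G" for \<mu>
  proof -
    obtain y where y: "y \<in> W" "y \<noteq> 0" "G y = sc' \<mu> y" using mu unfolding evs_def by blast
    obtain x where x: "x \<in> V" "y = \<psi> x" using img y(1) by blast
    have "x \<noteq> 0" using x y(2) p0 by auto
    moreover have "\<psi> (g x) = \<psi> (sc \<mu> x)"
    proof -
      have "\<psi> (g x) = G y" using com x by simp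
      also have "\<dots> = sc' \<mu> (\<psi> x)" using y(3) x by simp
      also have "\<dots> = \<psi> (sc \<mu> x)" using scl x(1) by simp
      finally show ?thesis .
    qed
    then have "g x = sc \<mu> x" using inj gV scV x(1) unfolding inj_on_def by blast
    ultimately show ?thesis using x(1) unfolding evs_def by blast
  qed
  show ?thesis using A B by blast
qed

definition "ind i j = (\<lambda>p::nat\<times>nat. if p = (i,j) then (1::complex) else 0)"

lemma ind_L: "i \<le> m \<Longrightarrow> j \<le> n \<Longrightarrow> ind i j \<in> Lcarrier m n"
  unfolding ind_def Lcarrier_def by auto
lemma ind_nz: "ind i j \<noteq> 0"
proof
  assume "ind i j = 0"
  then have "ind i j (i,j) = 0" by simp
  then show False unfolding ind_def by simp
qed

lemma L_evK1_mem: "i \<le> m \<Longrightarrow> lam * q powi (int m - 2 * int i) \<in> evs fscale (Lcarrier m n) (opK1 (Lops q m n d lam))"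
proof -
  assume i: "i \<le> m"
  have "opK1 (Lops q m n d lam) (ind i 0) = fscale (lam * q powi (int m - 2 * int i)) (ind i 0)"
    by (rule ext) (simp add: Lops_def fscale_def ind_def split: prod.split)
  then show ?thesis unfolding evs_def using ind_L[OF i, of 0 n] ind_nz by blast
qed
lemma L_evK2_mem: "j \<le> n \<Longrightarrow> d * inverse lam * q powi (int n - 2 * int j) \<in> evs fscale (Lcarrier m n) (opK2 (Lops q m n d lam))"
proof -
  assume j: "j \<le> n"
  have "opK2 (Lops q m n d lam) (ind 0 j) = fscale (d * inverse lam * q powi (int n - 2 * int j)) (ind 0 j)"
    by (rule ext) (simp add: Lops_def fscale_def ind_def split: prod.split)
  then show ?thesis unfolding evs_def using ind_L[OF _ j, of 0 m] ind_nz by blast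
qed
lemma L_evI_mem: "lam^2 \<in> evs fscale (Lcarrier m n) (opI (Lops q m n d lam))"
proof -
  have "opI (Lops q m n d lam) (ind 0 0) = fscale (lam^2) (ind 0 0)"
    by (rule ext) (simp add: Lops_def fscale_def ind_def split: prod.split)
  then show ?thesis unfolding evs_def using ind_L[of 0 m 0 n] ind_nz by blast
qed

lemma L_nz_point: "f \<in> Lcarrier m n \<Longrightarrow> f \<noteq> 0 \<Longrightarrow> \<exists>i j. i \<le> m \<and> j \<le> n \<and> f (i,j) \<noteq> 0"
proof -
  assume f: "f \<in> Lcarrier m n" "f \<noteq> 0"
  have "\<exists>p. f p \<noteq> 0"
  proof (rule ccontr)
    assume "\<not> (\<exists>p. f p \<noteq> 0)"
    then have "f = 0" by (auto intro: ext)
    then show False using f(2) by simp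
  qed
  then obtain i j where ij: "f (i,j) \<noteq> 0" by auto
  then have "\<not> (m < i \<or> n < j)" using f(1) unfolding Lcarrier_def by blast
  then have "i \<le> m" "j \<le> n" by auto
  then show ?thesis using ij by blast
qed

lemma L_evK1_sub: "\<mu> \<in> evs fscale (Lcarrier m n) (opK1 (Lops q m n d lam)) \<Longrightarrow> \<exists>i\<le>m. \<mu> = lam * q powi (int m - 2 * int i)"
proof -
  assume "\<mu> \<in> evs fscale (Lcarrier m n) (opK1 (Lops q m n d lam))"
  then obtain f where f: "f \<in> Lcarrier m n" "f \<noteq> 0" "opK1 (Lops q m n d lam) f = fscale \<mu> f"
    unfolding evs_def by blast
  obtain i j where ij: "i \<le> m" "j \<le> n" "f (i,j) \<noteq> 0" using L_nz_point[OF f(1,2)] by blast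
  have "opK1 (Lops q m n d lam) f (i,j) = fscale \<mu> f (i,j)" using f(3) by simp
  then have "lam * q powi (int m - 2 * int i) * f (i,j) = \<mu> * f (i,j)" by (simp add: Lops_def fscale_def)
  then show ?thesis using ij by auto
qed
lemma L_evK2_sub: "\<mu> \<in> evs fscale (Lcarrier m n) (opK2 (Lops q m n d lam)) \<Longrightarrow> \<exists>j\<le>n. \<mu> = d * inverse lam * q powi (int n - 2 * int j)"
proof -
  assume "\<mu> \<in> evs fscale (Lcarrier m n) (opK2 (Lops q m n d lam))"
  then obtain f where f: "f \<in> Lcarrier m n" "f \<noteq> 0" "opK2 (Lops q m n d lam) f = fscale \<mu> f"
    unfolding evs_def by blast
  obtain i j where ij: "i \<le> m" "j \<le> n" "f (i,j) \<noteq> 0" using L_nz_point[OF f(1,2)] by blast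
  have "opK2 (Lops q m n d lam) f (i,j) = fscale \<mu> f (i,j)" using f(3) by simp
  then have "d * inverse lam * q powi (int n - 2 * int j) * f (i,j) = \<mu> * f (i,j)" by (simp add: Lops_def fscale_def)
  then show ?thesis using ij by auto
qed
lemma L_evI_sub: "\<mu> \<in> evs fscale (Lcarrier m n) (opI (Lops q m n d lam)) \<Longrightarrow> \<mu> = lam^2"
proof -
  assume "\<mu> \<in> evs fscale (Lcarrier m n) (opI (Lops q m n d lam))"
  then obtain f where f: "f \<in> Lcarrier m n" "f \<noteq> 0" "opI (Lops q m n d lam) f = fscale \<mu> f"
    unfolding evs_def by blast
  obtain i j where ij: "i \<le> m" "j \<le> n" "f (i,j) \<noteq> 0" using L_nz_point[OF f(1,2)] by blast
  have "opI (Lops q m n d lam) f (i,j) = fscale \<mu> f (i,j)" using f(3) by simp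
  then have "lam^2 * f (i,j) = \<mu> * f (i,j)" by (simp add: Lops_def fscale_def)
  then show ?thesis using ij by auto
qed


lemma powi_one: fixes q :: complex assumes q0: "q \<noteq> 0" and qnr: "\<forall>k::nat. 0 < k \<longrightarrow> q ^ k \<noteq> 1"
  and h: "q powi z = 1" shows "z = 0"
proof (cases "0 \<le> z")
  case True
  define k where "k = nat z"
  have k: "z = int k" unfolding k_def using True by simp
  then have "q^k = 1" using h by simp
  then show ?thesis using qnr k by (cases "k = 0") auto
next
  case False
  define k where "k = nat (- z)"
  have k: "z = - int k" unfolding k_def using False by simp
  then have "inverse (q^k) = 1" using h by (simp add: power_int_minus)
  then have "q^k = 1" by (simp add: inverse_eq_iff_eq)
  then show ?thesis using qnr k by (cases "k = 0") auto
qed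

lemma powi_inj: fixes q :: complex assumes q0: "q \<noteq> 0" and qnr: "\<forall>k::nat. 0 < k \<longrightarrow> q ^ k \<noteq> 1"
  and h: "q powi x = q powi y" shows "x = y"
proof -
  have "q powi (x - y) = q powi x / q powi y" using power_int_diff[of q x y] q0 by simp
  also have "\<dots> = 1" using h q0 by simp
  finally have "x - y = 0" by (rule powi_one[OF q0 qnr])
  then show ?thesis by simp
qed

lemma pair_alg:
  fixes q c c' :: complex and M M' :: nat
  assumes q0: "q \<noteq> 0" and qnr: "\<forall>k::nat. 0 < k \<longrightarrow> q ^ k \<noteq> 1"
    and c0: "c \<noteq> 0" "c' \<noteq> 0" and sq: "c^2 = c'^2"
    and h1: "\<exists>i\<le>M'. c * q powi (int M) = c' * q powi (int M' - 2 * int i)"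
    and h2: "\<exists>i\<le>M. c' * q powi (int M') = c * q powi (int M - 2 * int i)"
  shows "M = M' \<and> c = c'"
proof -
  obtain i where i: "c * q powi (int M) = c' * q powi (int M' - 2 * int i)" using h1 by blast
  obtain i' where i': "c' * q powi (int M') = c * q powi (int M - 2 * int i')" using h2 by blast
  have "c * q powi (int M) * (c' * q powi (int M')) = c' * q powi (int M' - 2 * int i) * (c * q powi (int M - 2 * int i'))"
    using i i' by simp
  then have "(c * c') * (q powi (int M) * q powi (int M')) = (c * c') * (q powi (int M' - 2 * int i) * q powi (int M - 2 * int i'))"
    by (simp add: mult_ac)
  then have "q powi (int M) * q powi (int M') = q powi (int M' - 2 * int i) * q powi (int M - 2 * int i')"
    using c0 by simp
  then have "q powi (int M + int M') = q powi (int M' - 2 * int i + (int M - 2 * int i'))"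
    using q0 by (simp add: power_int_add)
  then have "int M + int M' = int M' - 2 * int i + (int M - 2 * int i')" by (rule powi_inj[OF q0 qnr])
  then have "i = 0" by simp
  then have e: "c * q powi (int M) = c' * q powi (int M')" using i by simp
  then have "(c * q powi (int M))^2 = (c' * q powi (int M'))^2" by simp
  then have "c^2 * (q powi (int M) * q powi (int M)) = c'^2 * (q powi (int M') * q powi (int M'))"
    by (simp add: power2_eq_square mult_ac)
  then have "q powi (int M) * q powi (int M) = q powi (int M') * q powi (int M')" using sq c0 by simp
  then have "q^(M+M) = q^(M'+M')" using q0 by (simp add: power_add)
  then have "q powi (int (M+M)) = q powi (int (M'+M'))" by (simp only: power_int_of_nat)
  then have "int (M+M) = int (M'+M')" by (rule powi_inj[OF q0 qnr])
  then have MM: "M = M'" by simp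
  then have "c = c'" using e q0 by simp
  then show ?thesis using MM by simp
qed

context wq begin

lemma iso_evs: assumes "wq_iso sc V r fscale (Lcarrier m n) (Lops q m n d lam)"
  shows "evs sc V K1 = evs fscale (Lcarrier m n) (opK1 (Lops q m n d lam))"
    "evs sc V K2 = evs fscale (Lcarrier m n) (opK2 (Lops q m n d lam))"
    "evs sc V I = evs fscale (Lcarrier m n) (opI (Lops q m n d lam))"
proof -
  let ?Lo = "Lops q m n d lam"
  obtain \<psi> where p1: "bij_betw \<psi> V (Lcarrier m n)" and p2: "\<forall>x\<in>V. \<forall>y\<in>V. \<psi> (x + y) = \<psi> x + \<psi> y"
    and p3: "\<forall>c. \<forall>x\<in>V. \<psi> (sc c x) = fscale c (\<psi> x)"
    and p4: "\<forall>x\<in>V. \<psi> (E1 x) = opE1 ?Lo (\<psi> x) \<and> \<psi> (E2 x) = opE2 ?Lo (\<psi> x) \<and>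
              \<psi> (F1 x) = opF1 ?Lo (\<psi> x) \<and> \<psi> (F2 x) = opF2 ?Lo (\<psi> x) \<and>
              \<psi> (K1 x) = opK1 ?Lo (\<psi> x) \<and> \<psi> (K1i x) = opK1i ?Lo (\<psi> x) \<and>
              \<psi> (K2 x) = opK2 ?Lo (\<psi> x) \<and> \<psi> (K2i x) = opK2i ?Lo (\<psi> x) \<and>
              \<psi> (I x) = opI ?Lo (\<psi> x) \<and> \<psi> (Ii x) = opIi ?Lo (\<psi> x)"
    using assms unfolding wq_iso_def by blast
  have p: "bij_betw \<psi> V (Lcarrier m n)" "\<forall>x\<in>V. \<forall>y\<in>V. \<psi> (x + y) = \<psi> x + \<psi> y"
    "\<forall>c. \<forall>x\<in>V. \<psi> (sc c x) = fscale c (\<psi> x)"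
    "\<forall>x\<in>V. \<psi> (K1 x) = opK1 ?Lo (\<psi> x)"
    "\<forall>x\<in>V. \<psi> (K2 x) = opK2 ?Lo (\<psi> x)"
    "\<forall>x\<in>V. \<psi> (I x) = opI ?Lo (\<psi> x)"
    using p1 p2 p3 p4 by simp_all
  have sV: "\<forall>c. \<forall>x\<in>V. sc c x \<in> V" using subspace_scale[OF subV] by blast
  have z: "0 \<in> V" using subspace_0[OF subV] .
  show "evs sc V K1 = evs fscale (Lcarrier m n) (opK1 (Lops q m n d lam))"
    by (rule evs_iso[OF p(1,2,3) _ sV z p(4)]) (use lin_in[OF gens(5)] in blast)
  show "evs sc V K2 = evs fscale (Lcarrier m n) (opK2 (Lops q m n d lam))"
    by (rule evs_iso[OF p(1,2,3) _ sV z p(5)]) (use lin_in[OF gens(7)] in blast)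
  show "evs sc V I = evs fscale (Lcarrier m n) (opI (Lops q m n d lam))"
    by (rule evs_iso[OF p(1,2,3) _ sV z p(6)]) (use lin_in[OF gens(9)] in blast)
qed

lemma wq_unique:
  assumes i1: "wq_iso sc V r fscale (Lcarrier m n) (Lops q m n d lam)" and d: "d \<in> {1,-1}" and l: "lam \<noteq> 0"
    and i2: "wq_iso sc V r fscale (Lcarrier m' n') (Lops q m' n' d' lam')" and d': "d' \<in> {1,-1}" and l': "lam' \<noteq> 0"
  shows "m = m' \<and> n = n' \<and> d = d' \<and> lam = lam'"
proof -
  note e1 = iso_evs[OF i1] and e2 = iso_evs[OF i2]
  have "lam^2 \<in> evs fscale (Lcarrier m' n') (opI (Lops q m' n' d' lam'))"
    using L_evI_mem[of lam m n q d] e1(3) e2(3) by simp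
  then have sq: "lam^2 = lam'^2" by (rule L_evI_sub)
  have "lam * q powi (int m - 2 * int 0) \<in> evs fscale (Lcarrier m' n') (opK1 (Lops q m' n' d' lam'))"
    using L_evK1_mem[of 0 m lam q n d] e1(1) e2(1) by simp
  then have h1: "\<exists>i\<le>m'. lam * q powi (int m) = lam' * q powi (int m' - 2 * int i)"
    using L_evK1_sub by fastforce
  have "lam' * q powi (int m' - 2 * int 0) \<in> evs fscale (Lcarrier m n) (opK1 (Lops q m n d lam))"
    using L_evK1_mem[of 0 m' lam' q n' d'] e1(1) e2(1) by simp
  then have h2: "\<exists>i\<le>m. lam' * q powi (int m') = lam * q powi (int m - 2 * int i)"
    using L_evK1_sub by fastforce
  have ml: "m = m' \<and> lam = lam'" by (rule pair_alg[OF q0 qnr l l' sq h1 h2])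
  have c0: "d * inverse lam \<noteq> 0" "d' * inverse lam' \<noteq> 0" using d d' l l' by auto
  have csq: "(d * inverse lam)^2 = (d' * inverse lam')^2" using d d' ml by (auto simp: power_mult_distrib)
  have "d * inverse lam * q powi (int n - 2 * int 0) \<in> evs fscale (Lcarrier m' n') (opK2 (Lops q m' n' d' lam'))"
    using L_evK2_mem[of 0 n d lam q m] e1(2) e2(2) by simp
  then have k1: "\<exists>j\<le>n'. d * inverse lam * q powi (int n) = d' * inverse lam' * q powi (int n' - 2 * int j)"
    using L_evK2_sub by fastforce
  have "d' * inverse lam' * q powi (int n' - 2 * int 0) \<in> evs fscale (Lcarrier m n) (opK2 (Lops q m n d lam))"
    using L_evK2_mem[of 0 n' d' lam' q m'] e1(2) e2(2) by simp
  then have k2: "\<exists>j\<le>n. d' * inverse lam' * q powi (int n') = d * inverse lam * q powi (int n - 2 * int j)"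
    using L_evK2_sub by fastforce
  have nd: "n = n' \<and> d * inverse lam = d' * inverse lam'" by (rule pair_alg[OF q0 qnr c0 csq k1 k2])
  then have "d = d'" using ml l by simp
  then show ?thesis using ml nd by simp
qed

end

theorem mainTheorem8:
  fixes q :: complex and sc :: "complex \<Rightarrow> 'v::ab_group_add \<Rightarrow> 'v"
    and V :: "'v set" and r :: "'v wq_ops"
  assumes "q \<noteq> 0" and "\<forall>k::nat. 0 < k \<longrightarrow> q ^ k \<noteq> 1"
    and "wq_module q sc V r" and "fin_dim sc V" and "wq_irreducible sc V r"
  shows "\<exists>!(p :: nat \<times> nat \<times> complex \<times> complex).
           (case p of (m, n, d, lam) \<Rightarrow>
              d \<in> {1, -1} \<and> lam \<noteq> 0 \<and> wq_iso sc V r fscale (Lcarrier m n) (Lops q m n d lam))"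
proof -
  have vs: "vector_space sc" and sub: "module.subspace sc V" using assms(3) unfolding wq_module_def by auto
  obtain B where B: "finite B" "B \<subseteq> V" "module.span sc B = V" using assms(4) unfolding fin_dim_def by blast
  interpret W: wq sc V B q r
    by (intro wq.intro fdvs.intro wq_axioms.intro fdvs_axioms.intro vs sub B assms)
  obtain m n d lam where ex: "d \<in> {1,-1}" "lam \<noteq> 0" "wq_iso sc V r fscale (Lcarrier m n) (Lops q m n d lam)"
    using W.wq_exists by blast
  show ?thesis
  proof (rule ex1I[of _ "(m,n,d,lam)"])
    show "case (m,n,d,lam) of (m, n, d, lam) \<Rightarrow>
              d \<in> {1, -1} \<and> lam \<noteq> 0 \<and> wq_iso sc V r fscale (Lcarrier m n) (Lops q m n d lam)"
      using ex by simp
  next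
    fix p :: "nat \<times> nat \<times> complex \<times> complex"
    assume h: "case p of (m, n, d, lam) \<Rightarrow>
              d \<in> {1, -1} \<and> lam \<noteq> 0 \<and> wq_iso sc V r fscale (Lcarrier m n) (Lops q m n d lam)"
    obtain m' n' d' lam' where p: "p = (m',n',d',lam')" by (cases p) auto
    have "m = m' \<and> n = n' \<and> d = d' \<and> lam = lam'"
      using W.wq_unique[OF ex(3) ex(1) ex(2)] h p by auto
    then show "p = (m,n,d,lam)" using p by simp
  qed
qed

end
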